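(* Let $\mathcal F$ be a class of measurable functions $\mathbb X\times\mathbb A\to\mathbb R$, and let $\mathcal A$ be an online algorithm producing estimates $\hat\mu_i(\mathbf O_{i-1}):\mathbb X\times\mathbb A\to\mathbb R$, $i\in[n]$, each depending measurably only on $\mathbf O_{i-1}$. For $\mu:\mathbb X\times\mathbb A\to\mathbb R$ define the losses $$l_i(\mu):=\frac{g^2(X_i,A_i)}{(\pi_i^* )^2(X_i,\mathbf O_{i-1};A_i)}\{Y_i-\mu(X_i,A_i)\}^2,$$ and the regret $\mathrm{Regret}(n,\mathcal F;\mathcal A):=\sum_{i=1}^n l_i(\hat\mu_i(\mathbf O_{i-1}))-\inf_{\mu\in\mathcal F}\sum_{i=1}^n l_i(\mu)$. Then the AIPW estimator $\hat\tau_n^{\mathrm{AIPW}}$ built from these estimates satisfies $$\mathbb E_{\mathcal I^*}\big[\{\hat\tau_n^{\mathrm{AIPW}}(\mathbf O_n)-\tau(\mathcal I^* )\}^2\big]\le\frac1n\Big(v_*^2+\frac1n\mathbb E_{\mathcal I^*}[\mathrm{Regret}(n,\mathcal F;\mathcal A)]+\inf_{\mu\in\mathcal F}\|\mu-\mu^*\|_{(n)}^2\Big).$$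
   Context: Setup. Let $(\mathbb X,\lambda_{\mathbb X})$, $(\mathbb A,\lambda_{\mathbb A})$, $(\mathbb Y,\lambda_{\mathbb Y})$ be measurable spaces with $\sigma$-finite measures, $\mathbb Y\subseteq\mathbb R$, and $\mathbb O:=\mathbb X\times\mathbb A\times\mathbb Y$. A problem instance is a pair $\mathcal I=(\Xi,\Gamma)$ where $\Xi$ is a probability measure on $\mathbb X$ and $\Gamma$ is a Markov kernel from $\mathbb X\times\mathbb A$ to $\mathbb Y$. For each $i\in[n]$ a known behavioral policy $\Pi_i^*$ is a Markov kernel from $\mathbb X\times\mathbb O^{i-1}$ to $\mathbb A$ with density $\pi_i^*(x,\mathbf o_{i-1};\cdot):=d\Pi_i^*(\cdot\mid x,\mathbf o_{i-1})/d\lambda_{\mathbb A}$. Under instance $\mathcal I$, data $\mathbf O_n=(X_1,A_1,Y_1,\dots,X_n,A_n,Y_n)$ are generated sequentially: for $i=1,\dots,n$, $X_i\sim\Xi$ independently of $\mathbf O_{i-1}$; $A_i\mid(X_i,\mathbf O_{i-1})\sim\Pi_i^*(\cdot\mid X_i,\mathbf O_{i-1})$; $Y_i\mid(X_i,A_i,\mathbf O_{i-1})\sim\Gamma(\cdot\mid X_i,A_i)$. Here $\mathbf O_i$ denotes the first $i$ triples ($\mathbf O_0=\varnothing$). $\mathbb E_{\mathcal I}$, $\mathrm{Var}_{\mathcal I}$ denote expectation/variance under this law. The true instance is $\mathcal I^*=(\Xi^*,\Gamma^* )$, with treatment effect $\mu^*(x,a):=\int y\,\Gamma^*(dy\mid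 x,a)$ and conditional variance $\sigma^2(x,a):=\int(y-\mu^*(x,a))^2\Gamma^*(dy\mid x,a)<\infty$. A measurable evaluation function $g:\mathbb X\times\mathbb A\to\mathbb R$ is given; $\langle f,h\rangle_{\lambda_{\mathbb A}}:=\int_{\mathbb A}f(a)h(a)\,d\lambda_{\mathbb A}(a)$. The target is $\tau(\mathcal I^* ):=\mathbb E_{X\sim\Xi^*}[\langle g(X,\cdot),\mu^*(X,\cdot)\rangle_{\lambda_{\mathbb A}}]$. For $\varphi:\mathbb X\times\mathbb A\to\mathbb R$ and $k\in[n]$, $\|\varphi\|_{(k)}^2:=\frac1k\sum_{i=1}^k\mathbb E_{\mathcal I^*}\big[g^2(X_i,A_i)\varphi^2(X_i,A_i)/(\pi_i^* )^2(X_i,\mathbf O_{i-1};A_i)\big]$. The efficient variance is $v_*^2:=\mathrm{Var}_{X\sim\Xi^*}[\langle g(X,\cdot),\mu^*(X,\cdot)\rangle_{\lambda_{\mathbb A}}]+\|\sigma\|_{(n)}^2$. AIPW estimator: $\hat\tau_n^{\mathrm{AIPW}}(\mathbf O_n):=\frac1n\sum_{i=1}^n\big[\frac{g(X_i,A_i)}{\pi_i^*(X_i,\mathbf O_{i-1};A_i)}\{Y_i-\hat\mu_i(\mathbf O_{i-1})(X_i,A_i)\}+\langle g(X_i,\cdot),\hat\mu_i(\mathbf O_{i-1})(X_i,\cdot)\rangle_{\lambda_{\mathbb A}}\big]$. All expectations appearing are assumed finite (and the infimum inside the regret measurable).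
   Formalization: Each behavioral policy density is also strictly positive wherever the evaluation function is nonzero: $\pi_i^*(x,\mathbf o_{i-1};a)>0$ whenever $g(x,a)\ne 0$, for every i, x, history and a. The statement above fails without it. *)

theory Defs
  imports "HOL-Probability.Probability"
begin

text \<open>Rounds are indexed 0-based: round i in {0..<n} corresponds to round i+1
of the paper. A history of the first i observations is an element of
PiM {..<i} of the observation space; a full data set is an element of PiM {..<n}.
The sigma-algebra on X is the one of the probability measure Xi; the measure on A is MA
(= lambda_A); responses are real with the Borel sigma-algebra.\<close>

type_synonym ('x, 'a) obs = "'x \<times> 'a \<times> real"
type_synonym ('x, 'a) hist = "nat \<Rightarrow> ('x, 'a) obs"

definition obsM :: "'x measure \<Rightarrow> 'a measure \<Rightarrow> ('x, 'a) obs measure" where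
  "obsM Xi MA = Xi \<Otimes>\<^sub>M (MA \<Otimes>\<^sub>M (borel :: real measure))"

definition histM :: "'x measure \<Rightarrow> 'a measure \<Rightarrow> nat \<Rightarrow> ('x, 'a) hist measure" where
  "histM Xi MA i = PiM {..<i} (\<lambda>_. obsM Xi MA)"

definition step_law :: "'x measure \<Rightarrow> 'a measure \<Rightarrow> ('x \<Rightarrow> 'a \<Rightarrow> real measure)
    \<Rightarrow> ('x \<Rightarrow> ('x, 'a) hist \<Rightarrow> 'a \<Rightarrow> real) \<Rightarrow> ('x, 'a) hist \<Rightarrow> ('x, 'a) obs measure" where
  "step_law Xi MA Gam p h =
     bind Xi (\<lambda>x. bind (density MA (\<lambda>a. ennreal (p x h a)))
       (\<lambda>a. bind (Gam x a) (\<lambda>y. return (obsM Xi MA) (x, a, y))))"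

fun data_law :: "'x measure \<Rightarrow> 'a measure \<Rightarrow> ('x \<Rightarrow> 'a \<Rightarrow> real measure)
    \<Rightarrow> (nat \<Rightarrow> 'x \<Rightarrow> ('x, 'a) hist \<Rightarrow> 'a \<Rightarrow> real) \<Rightarrow> nat \<Rightarrow> ('x, 'a) hist measure" where
  "data_law Xi MA Gam pol 0 = return (histM Xi MA 0) (\<lambda>_. undefined)"
| "data_law Xi MA Gam pol (Suc i) =
     bind (data_law Xi MA Gam pol i)
       (\<lambda>h. bind (step_law Xi MA Gam (pol i) h)
          (\<lambda>ob. return (histM Xi MA (Suc i)) (h(i := ob))))"

definition Xo :: "('x, 'a) hist \<Rightarrow> nat \<Rightarrow> 'x" where "Xo \<omega> i = fst (\<omega> i)"
definition Ao :: "('x, 'a) hist \<Rightarrow> nat \<Rightarrow> 'a" where "Ao \<omega> i = fst (snd (\<omega> i))"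
definition Yo :: "('x, 'a) hist \<Rightarrow> nat \<Rightarrow> real" where "Yo \<omega> i = snd (snd (\<omega> i))"
definition past :: "('x, 'a) hist \<Rightarrow> nat \<Rightarrow> ('x, 'a) hist" where
  "past \<omega> i = restrict \<omega> {..<i}"

definition mu_star :: "('x \<Rightarrow> 'a \<Rightarrow> real measure) \<Rightarrow> 'x \<Rightarrow> 'a \<Rightarrow> real" where
  "mu_star Gam x a = integral\<^sup>L (Gam x a) (\<lambda>y. y)"

definition sigma_fn :: "('x \<Rightarrow> 'a \<Rightarrow> real measure) \<Rightarrow> 'x \<Rightarrow> 'a \<Rightarrow> real" where
  "sigma_fn Gam x a = sqrt (integral\<^sup>L (Gam x a) (\<lambda>y. (y - mu_star Gam x a)\<^sup>2))"

definition innerA :: "'a measure \<Rightarrow> ('a \<Rightarrow> real) \<Rightarrow> ('a \<Rightarrow> real) \<Rightarrow> real" where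
  "innerA MA f h = integral\<^sup>L MA (\<lambda>a. f a * h a)"

definition tau :: "'x measure \<Rightarrow> 'a measure \<Rightarrow> ('x \<Rightarrow> 'a \<Rightarrow> real measure) \<Rightarrow> ('x \<Rightarrow> 'a \<Rightarrow> real) \<Rightarrow> real" where
  "tau Xi MA Gam g = integral\<^sup>L Xi (\<lambda>x. innerA MA (g x) (mu_star Gam x))"

definition wnorm2 :: "'x measure \<Rightarrow> 'a measure \<Rightarrow> ('x \<Rightarrow> 'a \<Rightarrow> real measure)
    \<Rightarrow> (nat \<Rightarrow> 'x \<Rightarrow> ('x, 'a) hist \<Rightarrow> 'a \<Rightarrow> real) \<Rightarrow> ('x \<Rightarrow> 'a \<Rightarrow> real) \<Rightarrow> nat
    \<Rightarrow> ('x \<Rightarrow> 'a \<Rightarrow> real) \<Rightarrow> real" where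
  "wnorm2 Xi MA Gam pol g k phi =
     (1 / real k) * (\<Sum>i<k. integral\<^sup>L (data_law Xi MA Gam pol k)
        (\<lambda>\<omega>. (g (Xo \<omega> i) (Ao \<omega> i))\<^sup>2 * (phi (Xo \<omega> i) (Ao \<omega> i))\<^sup>2
               / (pol i (Xo \<omega> i) (past \<omega> i) (Ao \<omega> i))\<^sup>2))"

definition eff_var :: "'x measure \<Rightarrow> 'a measure \<Rightarrow> ('x \<Rightarrow> 'a \<Rightarrow> real measure)
    \<Rightarrow> (nat \<Rightarrow> 'x \<Rightarrow> ('x, 'a) hist \<Rightarrow> 'a \<Rightarrow> real) \<Rightarrow> ('x \<Rightarrow> 'a \<Rightarrow> real) \<Rightarrow> nat \<Rightarrow> real" where
  "eff_var Xi MA Gam pol g n =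
     integral\<^sup>L Xi (\<lambda>x. (innerA MA (g x) (mu_star Gam x) - tau Xi MA Gam g)\<^sup>2)
     + wnorm2 Xi MA Gam pol g n (sigma_fn Gam)"

definition loss :: "(nat \<Rightarrow> 'x \<Rightarrow> ('x, 'a) hist \<Rightarrow> 'a \<Rightarrow> real) \<Rightarrow> ('x \<Rightarrow> 'a \<Rightarrow> real)
    \<Rightarrow> nat \<Rightarrow> ('x \<Rightarrow> 'a \<Rightarrow> real) \<Rightarrow> ('x, 'a) hist \<Rightarrow> real" where
  "loss pol g i mu \<omega> =
     (g (Xo \<omega> i) (Ao \<omega> i))\<^sup>2 / (pol i (Xo \<omega> i) (past \<omega> i) (Ao \<omega> i))\<^sup>2
       * (Yo \<omega> i - mu (Xo \<omega> i) (Ao \<omega> i))\<^sup>2"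

definition regret :: "(nat \<Rightarrow> 'x \<Rightarrow> ('x, 'a) hist \<Rightarrow> 'a \<Rightarrow> real) \<Rightarrow> ('x \<Rightarrow> 'a \<Rightarrow> real)
    \<Rightarrow> nat \<Rightarrow> ('x \<Rightarrow> 'a \<Rightarrow> real) set \<Rightarrow> (nat \<Rightarrow> ('x, 'a) hist \<Rightarrow> 'x \<Rightarrow> 'a \<Rightarrow> real)
    \<Rightarrow> ('x, 'a) hist \<Rightarrow> real" where
  "regret pol g n F muhat \<omega> =
     (\<Sum>i<n. loss pol g i (muhat i (past \<omega> i)) \<omega>)
     - (INF mu\<in>F. \<Sum>i<n. loss pol g i mu \<omega>)"

definition aipw :: "'a measure \<Rightarrow> (nat \<Rightarrow> 'x \<Rightarrow> ('x, 'a) hist \<Rightarrow> 'a \<Rightarrow> real) \<Rightarrow> ('x \<Rightarrow> 'a \<Rightarrow> real)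
    \<Rightarrow> nat \<Rightarrow> (nat \<Rightarrow> ('x, 'a) hist \<Rightarrow> 'x \<Rightarrow> 'a \<Rightarrow> real) \<Rightarrow> ('x, 'a) hist \<Rightarrow> real" where
  "aipw MA pol g n muhat \<omega> =
     (1 / real n) * (\<Sum>i<n.
        g (Xo \<omega> i) (Ao \<omega> i) / pol i (Xo \<omega> i) (past \<omega> i) (Ao \<omega> i)
          * (Yo \<omega> i - muhat i (past \<omega> i) (Xo \<omega> i) (Ao \<omega> i))
        + innerA MA (g (Xo \<omega> i)) (muhat i (past \<omega> i) (Xo \<omega> i)))"

end

theory Submission
  imports Defs
begin


lemma GB_nonneg:
  fixes f :: "'b \<Rightarrow> real"
  assumes N: "N \<in> M \<rightarrow>\<^sub>M prob_algebra K" and M: "prob_space M"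
    and f[measurable]: "f \<in> borel_measurable K" and nn: "\<And>x. x \<in> space K \<Longrightarrow> 0 \<le> f x"
    and int: "integrable (M \<bind> N) f"
  shows "(AE x in M. integrable (N x) f) \<and> integrable M (\<lambda>x. integral\<^sup>L (N x) f)
     \<and> integral\<^sup>L (M \<bind> N) f = (\<integral>x. integral\<^sup>L (N x) f \<partial>M)"
proof -
  have Ns: "N \<in> M \<rightarrow>\<^sub>M subprob_algebra K" using N by (rule measurable_prob_algebraD)
  have ne: "space M \<noteq> {}" using M prob_space.not_empty by blast
  have sb: "sets (M \<bind> N) = sets K" using sets_bind[OF sets_kernel[OF Ns] ne] .
  have sbs: "space (M \<bind> N) = space K" using sb sets_eq_imp_space_eq by blast
  have fb: "f \<in> borel_measurable (M \<bind> N)" using f measurable_cong_sets[OF sb refl] by blast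
  have nnb: "AE x in M \<bind> N. 0 \<le> f x" using nn sbs by (auto intro!: AE_I2)
  have e1: "(\<integral>\<^sup>+x. ennreal (f x) \<partial>(M \<bind> N)) = ennreal (integral\<^sup>L (M \<bind> N) f)"
    by (rule nn_integral_eq_integral[OF int nnb])
  have e2: "(\<integral>\<^sup>+x. ennreal (f x) \<partial>(M \<bind> N)) = (\<integral>\<^sup>+x. \<integral>\<^sup>+y. ennreal (f y) \<partial>N x \<partial>M)"
    by (rule nn_integral_bind[OF _ Ns]) measurable
  have fin: "(\<integral>\<^sup>+x. \<integral>\<^sup>+y. ennreal (f y) \<partial>N x \<partial>M) \<noteq> \<infinity>" using e1 e2 by simp
  have mi: "(\<lambda>x. \<integral>\<^sup>+y. ennreal (f y) \<partial>N x) \<in> borel_measurable M"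
    by (rule measurable_compose[OF Ns nn_integral_measurable_subprob_algebra]) measurable
  have aefin: "AE x in M. (\<integral>\<^sup>+y. ennreal (f y) \<partial>N x) \<noteq> \<infinity>"
    using nn_integral_PInf_AE[OF mi fin] .
  have intx: "integrable (N x) f" if x: "x \<in> space M" "(\<integral>\<^sup>+y. ennreal (f y) \<partial>N x) \<noteq> \<infinity>" for x
  proof (rule integrableI_bounded)
    show "f \<in> borel_measurable (N x)" by (subst measurable_cong_sets[OF sets_kernel[OF Ns x(1)] refl]) (rule f)
    have "(\<integral>\<^sup>+y. ennreal (norm (f y)) \<partial>N x) = (\<integral>\<^sup>+y. ennreal (f y) \<partial>N x)"
      using nn subprob_measurableD(1)[OF Ns x(1)] by (intro nn_integral_cong) auto
    then show "(\<integral>\<^sup>+y. ennreal (norm (f y)) \<partial>N x) < \<infinity>" using x(2) by (simp add: top.not_eq_extremum)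
  qed
  have AEint: "AE x in M. integrable (N x) f"
    using aefin by (rule AE_mp) (auto intro!: AE_I2 intx)
  have eqx: "ennreal (integral\<^sup>L (N x) f) = (\<integral>\<^sup>+y. ennreal (f y) \<partial>N x)"
    if x: "x \<in> space M" "integrable (N x) f" for x
    using nn subprob_measurableD(1)[OF Ns x(1)]
    by (intro nn_integral_eq_integral[symmetric] x(2) AE_I2) auto
  have hm: "(\<lambda>x. integral\<^sup>L (N x) f) \<in> borel_measurable M"
    by (rule measurable_compose[OF Ns integral_measurable_subprob_algebra]) measurable
  have hnn: "0 \<le> integral\<^sup>L (N x) f" if x: "x \<in> space M" for x
    using nn subprob_measurableD(1)[OF Ns x] by (intro integral_nonneg_AE AE_I2) auto
  have e3: "(\<integral>\<^sup>+x. ennreal (integral\<^sup>L (N x) f) \<partial>M) = (\<integral>\<^sup>+x. \<integral>\<^sup>+y. ennreal (f y) \<partial>N x \<partial>M)"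
    by (rule nn_integral_cong_AE, rule AE_mp[OF AEint]) (auto intro!: AE_I2 eqx)
  have ih: "integrable M (\<lambda>x. integral\<^sup>L (N x) f)"
  proof (rule integrableI_bounded[OF hm])
    have "(\<integral>\<^sup>+x. ennreal (norm (integral\<^sup>L (N x) f)) \<partial>M) = (\<integral>\<^sup>+x. ennreal (integral\<^sup>L (N x) f) \<partial>M)"
      using hnn by (intro nn_integral_cong) auto
    then show "(\<integral>\<^sup>+x. ennreal (norm (integral\<^sup>L (N x) f)) \<partial>M) < \<infinity>" using e3 fin
      by (simp add: top.not_eq_extremum)
  qed
  have "ennreal (\<integral>x. integral\<^sup>L (N x) f \<partial>M) = (\<integral>\<^sup>+x. ennreal (integral\<^sup>L (N x) f) \<partial>M)"
    using hnn by (intro nn_integral_eq_integral[symmetric] ih AE_I2) auto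
  then have "ennreal (\<integral>x. integral\<^sup>L (N x) f \<partial>M) = ennreal (integral\<^sup>L (M \<bind> N) f)"
    using e1 e2 e3 by simp
  moreover have "0 \<le> (\<integral>x. integral\<^sup>L (N x) f \<partial>M)" using hnn by (intro integral_nonneg_AE, intro AE_I2) auto
  moreover have "0 \<le> integral\<^sup>L (M \<bind> N) f" using nn sbs by (intro integral_nonneg_AE AE_I2) auto
  ultimately have "(\<integral>x. integral\<^sup>L (N x) f \<partial>M) = integral\<^sup>L (M \<bind> N) f" by simp
  then show ?thesis using AEint ih by simp
qed

lemma GB:
  fixes f :: "'b \<Rightarrow> real"
  assumes N: "N \<in> M \<rightarrow>\<^sub>M prob_algebra K" and M: "prob_space M"
    and f[measurable]: "f \<in> borel_measurable K"
    and int: "integrable (M \<bind> N) f"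
  shows "(AE x in M. integrable (N x) f) \<and> integrable M (\<lambda>x. integral\<^sup>L (N x) f)
     \<and> integral\<^sup>L (M \<bind> N) f = (\<integral>x. integral\<^sup>L (N x) f \<partial>M)"
proof -
  have Ns: "N \<in> M \<rightarrow>\<^sub>M subprob_algebra K" using N by (rule measurable_prob_algebraD)
  define fp where "fp x = max 0 (f x)" for x
  define fn where "fn x = max 0 (- f x)" for x
  have fpm[measurable]: "fp \<in> borel_measurable K" unfolding fp_def by measurable
  have fnm[measurable]: "fn \<in> borel_measurable K" unfolding fn_def by measurable
  have ip: "integrable (M \<bind> N) fp" unfolding fp_def using int by auto
  have in': "integrable (M \<bind> N) fn" unfolding fn_def using int by auto
  have P: "(AE x in M. integrable (N x) fp) \<and> integrable M (\<lambda>x. integral\<^sup>L (N x) fp)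
     \<and> integral\<^sup>L (M \<bind> N) fp = (\<integral>x. integral\<^sup>L (N x) fp \<partial>M)"
    by (rule GB_nonneg[OF N M fpm _ ip]) (simp add: fp_def)
  have Q: "(AE x in M. integrable (N x) fn) \<and> integrable M (\<lambda>x. integral\<^sup>L (N x) fn)
     \<and> integral\<^sup>L (M \<bind> N) fn = (\<integral>x. integral\<^sup>L (N x) fn \<partial>M)"
    by (rule GB_nonneg[OF N M fnm _ in']) (simp add: fn_def)
  have fd: "f x = fp x - fn x" for x unfolding fp_def fn_def by auto
  have fd': "f = (\<lambda>x. fp x - fn x)" using fd by (intro ext) simp
  have A1: "AE x in M. integrable (N x) fp" and A2: "AE x in M. integrable (N x) fn" using P Q by auto
  have AE1: "AE x in M. integrable (N x) f"
    using A1 A2 by eventually_elim (simp add: fd')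
  have AE2: "AE x in M. integral\<^sup>L (N x) f = integral\<^sup>L (N x) fp - integral\<^sup>L (N x) fn"
    using A1 A2 by eventually_elim (simp add: fd')
  have hm: "(\<lambda>x. integral\<^sup>L (N x) f) \<in> borel_measurable M"
    by (rule measurable_compose[OF Ns integral_measurable_subprob_algebra]) measurable
  have I2: "integrable M (\<lambda>x. integral\<^sup>L (N x) f)"
  proof (rule integrable_cong_AE_imp[OF _ hm])
    show I0: "integrable M (\<lambda>x. integral\<^sup>L (N x) fp - integral\<^sup>L (N x) fn)" using P Q by auto
    show "AE x in M. integral\<^sup>L (N x) fp - integral\<^sup>L (N x) fn = integral\<^sup>L (N x) f"
      using AE2 by eventually_elim simp
  qed
  have "integral\<^sup>L (M \<bind> N) f = integral\<^sup>L (M \<bind> N) fp - integral\<^sup>L (M \<bind> N) fn"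
    using ip in' by (simp add: fd[abs_def])
  also have "\<dots> = (\<integral>x. integral\<^sup>L (N x) fp - integral\<^sup>L (N x) fn \<partial>M)" using P Q by simp
  also have "\<dots> = (\<integral>x. integral\<^sup>L (N x) f \<partial>M)" 
  proof (rule integral_cong_AE[OF _ hm])
    show "(\<lambda>x. integral\<^sup>L (N x) fp - integral\<^sup>L (N x) fn) \<in> borel_measurable M"
      using P Q by (intro borel_measurable_integrable) auto
    show "AE x in M. integral\<^sup>L (N x) fp - integral\<^sup>L (N x) fn = integral\<^sup>L (N x) f"
      using AE2 by eventually_elim simp
  qed
  finally show ?thesis using AE1 I2 by simp
qed



lemma density_kernel:
  fixes p :: "'w \<Rightarrow> 'a \<Rightarrow> real"
  assumes sf: "sigma_finite_measure MA"
    and pm: "(\<lambda>(w, a). p w a) \<in> borel_measurable (W \<Otimes>\<^sub>M MA)"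
    and nn: "\<And>w a. w \<in> space W \<Longrightarrow> a \<in> space MA \<Longrightarrow> 0 \<le> p w a"
    and one: "\<And>w. w \<in> space W \<Longrightarrow> (\<integral>\<^sup>+a. ennreal (p w a) \<partial>MA) = 1"
  shows "(\<lambda>w. density MA (\<lambda>a. ennreal (p w a))) \<in> W \<rightarrow>\<^sub>M prob_algebra MA"
proof (rule measurable_prob_algebraI)
  have pw: "(\<lambda>a. p w a) \<in> borel_measurable MA" if "w \<in> space W" for w
    using measurable_Pair2[OF pm that] by simp
  show ps: "prob_space (density MA (\<lambda>a. ennreal (p w a)))" if w: "w \<in> space W" for w
  proof (rule prob_spaceI)
    have "emeasure (density MA (\<lambda>a. ennreal (p w a))) (space MA) = (\<integral>\<^sup>+a. ennreal (p w a) * indicator (space MA) a \<partial>MA)"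
      using pw[OF w] by (intro emeasure_density) auto
    also have "\<dots> = 1" using one[OF w] by (subst nn_integral_cong[where v="\<lambda>a. ennreal (p w a)"]) auto
    finally show "emeasure (density MA (\<lambda>a. ennreal (p w a))) (space (density MA (\<lambda>a. ennreal (p w a)))) = 1"
      by simp
  qed
  show "(\<lambda>w. density MA (\<lambda>a. ennreal (p w a))) \<in> W \<rightarrow>\<^sub>M subprob_algebra MA"
  proof (rule measurable_subprob_algebra)
    show "subprob_space (density MA (\<lambda>a. ennreal (p w a)))" if "w \<in> space W" for w
      using ps[OF that] by (rule prob_space_imp_subprob_space)
    show "sets (density MA (\<lambda>a. ennreal (p w a))) = sets MA" for w by simp
    fix A assume A[measurable]: "A \<in> sets MA"
    have pm'[measurable]: "(\<lambda>x. p (fst x) (snd x)) \<in> borel_measurable (W \<Otimes>\<^sub>M MA)" using pm by (simp add: split_beta')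
    have "(\<lambda>w. \<integral>\<^sup>+a. ennreal (p w a) * indicator A a \<partial>MA) \<in> borel_measurable W"
      by (intro sigma_finite_measure.borel_measurable_nn_integral[OF sf]) measurable
    moreover have "emeasure (density MA (\<lambda>a. ennreal (p w a))) A = (\<integral>\<^sup>+a. ennreal (p w a) * indicator A a \<partial>MA)"
      if "w \<in> space W" for w
      using pw[OF that] A by (intro emeasure_density) auto
    ultimately show "(\<lambda>w. emeasure (density MA (\<lambda>a. ennreal (p w a))) A) \<in> borel_measurable W"
      by (subst measurable_cong) auto
  qed
qed

locale model =
  fixes Xi :: "'x measure" and MA :: "'a measure"
    and Gam :: "'x \<Rightarrow> 'a \<Rightarrow> real measure"
    and pol :: "nat \<Rightarrow> 'x \<Rightarrow> ('x, 'a) hist \<Rightarrow> 'a \<Rightarrow> real"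
    and g :: "'x \<Rightarrow> 'a \<Rightarrow> real"
    and n :: nat
  assumes n_pos: "0 < n" and Xi_prob: "prob_space Xi"
    and MA_sf: "sigma_finite_measure MA"
    and Gam_kernel: "(\<lambda>(x, a). Gam x a) \<in> Xi \<Otimes>\<^sub>M MA \<rightarrow>\<^sub>M prob_algebra (borel :: real measure)"
    and Gam_var: "\<And>x a. x \<in> space Xi \<Longrightarrow> a \<in> space MA \<Longrightarrow> integrable (Gam x a) (\<lambda>y. y\<^sup>2)"
    and pi_meas: "\<And>i. i < n \<Longrightarrow>
       (\<lambda>(x, h, a). pol i x h a) \<in> Xi \<Otimes>\<^sub>M (histM Xi MA i \<Otimes>\<^sub>M MA) \<rightarrow>\<^sub>M borel"
    and pi_nonneg: "\<And>i x h a. i < n \<Longrightarrow> x \<in> space Xi \<Longrightarrow> h \<in> space (histM Xi MA i)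
       \<Longrightarrow> a \<in> space MA \<Longrightarrow> 0 \<le> pol i x h a"
    and pi_dens: "\<And>i x h. i < n \<Longrightarrow> x \<in> space Xi \<Longrightarrow> h \<in> space (histM Xi MA i)
       \<Longrightarrow> (\<integral>\<^sup>+ a. ennreal (pol i x h a) \<partial>MA) = 1"
    and overlap: "\<And>i x h a. i < n \<Longrightarrow> x \<in> space Xi \<Longrightarrow> h \<in> space (histM Xi MA i)
       \<Longrightarrow> a \<in> space MA \<Longrightarrow> g x a \<noteq> 0 \<Longrightarrow> 0 < pol i x h a"
    and g_meas: "(\<lambda>(x, a). g x a) \<in> borel_measurable (Xi \<Otimes>\<^sub>M MA)"
begin

abbreviation "H \<equiv> histM Xi MA"
abbreviation "OB \<equiv> obsM Xi MA"
abbreviation "SL i \<equiv> step_law Xi MA Gam (pol i)"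
abbreviation "D \<equiv> data_law Xi MA Gam pol"

lemma Gam_comp[measurable (raw)]:
  assumes "f \<in> M \<rightarrow>\<^sub>M Xi" "k \<in> M \<rightarrow>\<^sub>M MA"
  shows "(\<lambda>w. Gam (f w) (k w)) \<in> M \<rightarrow>\<^sub>M prob_algebra borel"
  using measurable_compose[OF measurable_Pair[OF assms] Gam_kernel] by simp

lemma g_comp[measurable (raw)]:
  assumes "f \<in> M \<rightarrow>\<^sub>M Xi" "k \<in> M \<rightarrow>\<^sub>M MA"
  shows "(\<lambda>w. g (f w) (k w)) \<in> borel_measurable M"
  using measurable_compose[OF measurable_Pair[OF assms] g_meas] by simp

lemma pol_comp:
  assumes "i < n" "f \<in> M \<rightarrow>\<^sub>M Xi" "h \<in> M \<rightarrow>\<^sub>M H i" "k \<in> M \<rightarrow>\<^sub>M MA"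
  shows "(\<lambda>w. pol i (f w) (h w) (k w)) \<in> borel_measurable M"
  using measurable_compose[OF measurable_Pair[OF assms(2) measurable_Pair[OF assms(3,4)]] pi_meas[OF assms(1)]] by simp

lemma MA_ne: "space MA \<noteq> {}"
proof
  assume e: "space MA = {}"
  obtain x where x: "x \<in> space Xi" using prob_space.not_empty[OF Xi_prob] by blast
  have h0: "(\<lambda>_. undefined) \<in> space (H 0)" by (simp add: histM_def space_PiM)
  have "(\<integral>\<^sup>+ a. ennreal (pol 0 x (\<lambda>_. undefined) a) \<partial>MA) = 1" by (rule pi_dens[OF n_pos x h0])
  then show False using e by (simp add: nn_integral_empty)
qed

lemma space_OB: "space OB = space Xi \<times> space MA \<times> UNIV"
  by (simp add: obsM_def space_pair_measure)

lemma space_H_ne: "space (H i) \<noteq> {}"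
  using MA_ne prob_space.not_empty[OF Xi_prob] by (auto simp: histM_def space_OB)

lemma SL_meas: assumes i: "i < n" shows "SL i \<in> H i \<rightarrow>\<^sub>M prob_algebra OB"
proof -
  note pc[measurable (raw)] = pol_comp[OF i]
  have K1: "(\<lambda>w. density MA (\<lambda>a. ennreal (pol i (snd w) (fst w) a))) \<in> (H i \<Otimes>\<^sub>M Xi) \<rightarrow>\<^sub>M prob_algebra MA"
    by (rule density_kernel[OF MA_sf]) (auto simp: space_pair_measure intro!: pi_nonneg[OF i] pi_dens[OF i])
  have K2: "(\<lambda>(w, a). bind (Gam (snd w) a) (\<lambda>y. return OB (snd w, a, y))) \<in> (H i \<Otimes>\<^sub>M Xi) \<Otimes>\<^sub>M MA \<rightarrow>\<^sub>M prob_algebra OB"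
    unfolding obsM_def by measurable
  have K3: "(\<lambda>(h, x). bind (density MA (\<lambda>a. ennreal (pol i x h a))) (\<lambda>a. bind (Gam x a) (\<lambda>y. return OB (x, a, y))))
     \<in> (H i \<Otimes>\<^sub>M Xi) \<rightarrow>\<^sub>M prob_algebra OB"
    using measurable_bind_prob_space2[OF K1 K2] by (simp add: split_beta')
  have X: "(\<lambda>h. Xi) \<in> H i \<rightarrow>\<^sub>M prob_algebra Xi"
    using Xi_prob by (intro measurable_const) (simp add: space_prob_algebra)
  show ?thesis unfolding step_law_def
    using measurable_bind_prob_space2[OF X K3] by simp
qed


lemma upd_meas: "(\<lambda>ob. h(k := ob)) \<in> OB \<rightarrow>\<^sub>M H (Suc k)" if "h \<in> space (H k)" for h k
proof -
  have "{..<Suc k} = insert k {..<k}" by auto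
  then show ?thesis using measurable_component_update[of h "{..<k}" "\<lambda>_. OB" k] that
    by (simp add: histM_def)
qed

lemma upd_meas2[measurable]: "(\<lambda>(h, ob). h(k := ob)) \<in> H k \<Otimes>\<^sub>M OB \<rightarrow>\<^sub>M H (Suc k)"
proof -
  have "{..<Suc k} = insert k {..<k}" by auto
  then show ?thesis using measurable_add_dim[of k "{..<k}" "\<lambda>_. OB"]
    by (simp add: histM_def)
qed

definition NK :: "nat \<Rightarrow> ('x, 'a) hist \<Rightarrow> ('x, 'a) hist measure" where
  "NK k h = distr (SL k h) (H (Suc k)) (\<lambda>ob. h(k := ob))"

lemma NK_meas: assumes k: "k < n" shows "NK k \<in> H k \<rightarrow>\<^sub>M prob_algebra (H (Suc k))"
  unfolding NK_def
  by (rule measurable_distr_prob_space2[OF SL_meas[OF k]]) (rule upd_meas2)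

lemma D_Suc0: assumes k: "k < n" and sp: "space (D k) = space (H k)" shows "D (Suc k) = bind (D k) (NK k)"
proof -
  have "D (Suc k) = bind (D k) (\<lambda>h. bind (SL k h) (\<lambda>ob. return (H (Suc k)) (h(k := ob))))"
    by simp
  also have "\<dots> = bind (D k) (NK k)"
  proof (rule bind_cong_All, intro ballI)
    fix h assume h: "h \<in> space (D k)"
    show "bind (SL k h) (\<lambda>ob. return (H (Suc k)) (h(k := ob))) = NK k h"
    proof -
      have True: "h \<in> space (H k)" using h sp by simp
      have sl: "SL k h \<in> space (prob_algebra OB)" using measurable_space[OF SL_meas[OF k] True] .
      then have ne: "space (SL k h) \<noteq> {}" by (auto simp: space_prob_algebra prob_space.not_empty)
      have sets: "sets (SL k h) = sets OB" using sl by (simp add: space_prob_algebra)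
      have m: "(\<lambda>ob. h(k := ob)) \<in> SL k h \<rightarrow>\<^sub>M H (Suc k)"
        using upd_meas[OF True] measurable_cong_sets[OF sets refl] by blast
      show ?thesis unfolding NK_def by (rule bind_return_distr'[OF ne m])
    qed
  qed
  finally show ?thesis .
qed

lemma D_space: "k \<le> n \<Longrightarrow> D k \<in> space (prob_algebra (H k))"
proof (induction k)
  case 0
  have "(\<lambda>_. undefined) \<in> space (H 0)" by (simp add: histM_def space_PiM)
  then show ?case by (simp add: space_prob_algebra prob_space_return)
next
  case (Suc k)
  then have k: "k < n" by simp
  have A: "D k \<in> space (prob_algebra (H k))" using Suc by simp
  then have sp: "space (D k) = space (H k)" by (intro sets_eq_imp_space_eq) (simp add: space_prob_algebra)
  show ?case unfolding D_Suc0[OF k sp] using sets_bind'[OF A NK_meas[OF k]] prob_space_bind'[OF A NK_meas[OF k]]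
    by (simp add: space_prob_algebra)
qed

lemma D_Suc: "k < n \<Longrightarrow> D (Suc k) = bind (D k) (NK k)"
  using D_space[of k] by (intro D_Suc0 sets_eq_imp_space_eq) (auto simp: space_prob_algebra)

lemma D_sets: "k \<le> n \<Longrightarrow> sets (D k) = sets (H k)"
  using D_space by (simp add: space_prob_algebra)

lemma D_prob: "k \<le> n \<Longrightarrow> prob_space (D k)"
  using D_space by (simp add: space_prob_algebra)

lemma D_spc: "k \<le> n \<Longrightarrow> space (D k) = space (H k)"
  using D_sets sets_eq_imp_space_eq by blast

lemma marg: "k \<le> m \<Longrightarrow> m \<le> n \<Longrightarrow> distr (D m) (H k) (\<lambda>\<omega>. restrict \<omega> {..<k}) = D k"
proof (induction m)
  case 0
  then have k: "k = 0" by simp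
  have u: "(\<lambda>_. undefined) \<in> space (H 0)" by (simp add: histM_def space_PiM)
  have "restrict (\<lambda>_. undefined) {..<0::nat} = (\<lambda>_. undefined)" by auto
  then show ?case using k u
    by (simp add: distr_return measurable_restrict_subset histM_def)
next
  case (Suc m)
  show ?case
  proof (cases "k = Suc m")
    case True
    have "distr (D (Suc m)) (H k) (\<lambda>\<omega>. restrict \<omega> {..<k}) = distr (D (Suc m)) (D (Suc m)) (\<lambda>\<omega>. \<omega>)"
    proof (rule distr_cong)
      show "sets (H k) = sets (D (Suc m))" using D_sets[OF Suc.prems(2)] True by simp
      fix \<omega> assume "\<omega> \<in> space (D (Suc m))"
      then have "\<omega> \<in> space (H k)" using D_spc[OF Suc.prems(2)] True by simp
      then show "restrict \<omega> {..<k} = \<omega>" by (auto simp: histM_def space_PiM PiE_def extensional_def)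
    qed simp
    then show ?thesis using True by (simp only: distr_id)
  next
    case False
    then have km: "k \<le> m" and m: "m < n" using Suc.prems by auto
    have IH: "distr (D m) (H k) (\<lambda>\<omega>. restrict \<omega> {..<k}) = D k" by (rule Suc.IH[OF km]) (use m in linarith)
    have r: "(\<lambda>\<omega>. restrict \<omega> {..<k}) \<in> H (Suc m) \<rightarrow>\<^sub>M H k"
      unfolding histM_def using km by (intro measurable_restrict_subset) auto
    have ne: "space (D m) \<noteq> {}" using D_spc[of m] m space_H_ne by simp
    have rm: "(\<lambda>\<omega>. restrict \<omega> {..<k}) \<in> H m \<rightarrow>\<^sub>M H k"
      unfolding histM_def using km by (intro measurable_restrict_subset) auto
    have "distr (D (Suc m)) (H k) (\<lambda>\<omega>. restrict \<omega> {..<k})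
        = bind (D m) (\<lambda>h. distr (NK m h) (H k) (\<lambda>\<omega>. restrict \<omega> {..<k}))"
    proof -
      have "NK m \<in> D m \<rightarrow>\<^sub>M subprob_algebra (H (Suc m))"
      proof -
        have eq: "D m \<rightarrow>\<^sub>M subprob_algebra (H (Suc m)) = H m \<rightarrow>\<^sub>M subprob_algebra (H (Suc m))"
          by (rule measurable_cong_sets[OF D_sets refl]) (use m in simp)
        show ?thesis unfolding eq by (rule measurable_prob_algebraD[OF NK_meas[OF m]])
      qed
      then show ?thesis unfolding D_Suc[OF m] by (rule distr_bind[OF _ ne r])
    qed
    also have "\<dots> = bind (D m) (\<lambda>h. return (H k) (restrict h {..<k}))"
    proof (rule bind_cong_All, intro ballI)
      fix h assume h: "h \<in> space (D m)"
      then have hH: "h \<in> space (H m)" using D_spc m by simp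
      have sl: "SL m h \<in> space (prob_algebra OB)" using measurable_space[OF SL_meas[OF m] hH] .
      then have ps: "prob_space (SL m h)" by (simp add: space_prob_algebra)
      have sets: "sets (SL m h) = sets OB" using sl by (simp add: space_prob_algebra)
      have um: "(\<lambda>ob. h(m := ob)) \<in> SL m h \<rightarrow>\<^sub>M H (Suc m)"
        using upd_meas[OF hH] measurable_cong_sets[OF sets refl] by blast
      have "distr (NK m h) (H k) (\<lambda>\<omega>. restrict \<omega> {..<k})
          = distr (SL m h) (H k) ((\<lambda>\<omega>. restrict \<omega> {..<k}) \<circ> (\<lambda>ob. h(m := ob)))"
        unfolding NK_def by (rule distr_distr[OF r um])
      also have "\<dots> = distr (SL m h) (H k) (\<lambda>_. restrict h {..<k})"
        by (rule distr_cong) (use km in \<open>simp_all add: restrict_def fun_eq_iff\<close>)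
      also have "\<dots> = return (H k) (restrict h {..<k})"
        proof (rule prob_space.distr_const[OF ps])
        show "restrict h {..<k} \<in> space (H k)" by (rule measurable_space[OF rm hH])
      qed
      finally show "distr (NK m h) (H k) (\<lambda>\<omega>. restrict \<omega> {..<k}) = return (H k) (restrict h {..<k})" .
    qed
    also have "\<dots> = distr (D m) (H k) (\<lambda>\<omega>. restrict \<omega> {..<k})"
    proof (rule bind_return_distr'[OF ne])
      show "(\<lambda>\<omega>. restrict \<omega> {..<k}) \<in> D m \<rightarrow>\<^sub>M H k"
      proof -
        have eq: "D m \<rightarrow>\<^sub>M H k = H m \<rightarrow>\<^sub>M H k"
          by (rule measurable_cong_sets[OF D_sets refl]) (use m in simp)
        show ?thesis unfolding eq by (rule rm)
      qed
    qed
    finally show ?thesis using IH by (rule trans)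
  qed
qed


lemma SL_sets: "i < n \<Longrightarrow> h \<in> space (H i) \<Longrightarrow> sets (SL i h) = sets OB"
  using measurable_space[OF SL_meas] by (simp add: space_prob_algebra)

lemma SL_prob: "i < n \<Longrightarrow> h \<in> space (H i) \<Longrightarrow> prob_space (SL i h)"
  using measurable_space[OF SL_meas] by (simp add: space_prob_algebra)

lemma SL_space: "i < n \<Longrightarrow> h \<in> space (H i) \<Longrightarrow> space (SL i h) = space OB"
  using SL_sets sets_eq_imp_space_eq by blast

lemma upd_meas_SL: "i < n \<Longrightarrow> h \<in> space (H i) \<Longrightarrow> (\<lambda>ob. h(i := ob)) \<in> SL i h \<rightarrow>\<^sub>M H (Suc i)"
  using upd_meas[of h i] measurable_cong_sets[OF SL_sets refl] by blast

lemma descent: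
  fixes F :: "('x, 'a) hist \<Rightarrow> real"
  assumes i: "i < n" and F[measurable]: "F \<in> borel_measurable (H (Suc i))"
    and int: "integrable (D n) (\<lambda>\<omega>. F (past \<omega> (Suc i)))"
  shows "(AE h in D i. integrable (SL i h) (\<lambda>ob. F (h(i := ob))))
    \<and> integrable (D i) (\<lambda>h. \<integral>ob. F (h(i := ob)) \<partial>SL i h)
    \<and> (\<integral>\<omega>. F (past \<omega> (Suc i)) \<partial>D n) = (\<integral>h. (\<integral>ob. F (h(i := ob)) \<partial>SL i h) \<partial>D i)"
proof -
  have r: "(\<lambda>\<omega>. past \<omega> (Suc i)) \<in> D n \<rightarrow>\<^sub>M H (Suc i)"
  proof -
    have eq: "D n \<rightarrow>\<^sub>M H (Suc i) = H n \<rightarrow>\<^sub>M H (Suc i)"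
      by (rule measurable_cong_sets[OF D_sets refl]) simp
    show ?thesis unfolding eq by (unfold past_def histM_def, intro measurable_restrict_subset) (use i in auto)
  qed
  have dm: "distr (D n) (H (Suc i)) (\<lambda>\<omega>. past \<omega> (Suc i)) = D (Suc i)"
    unfolding past_def using i by (intro marg) auto
  have int2: "integrable (D (Suc i)) F" using int integrable_distr_eq[OF r F] dm by simp
  have eq1: "(\<integral>\<omega>. F (past \<omega> (Suc i)) \<partial>D n) = integral\<^sup>L (D (Suc i)) F"
    using integral_distr[OF r F] dm by simp
  have NKD: "NK i \<in> D i \<rightarrow>\<^sub>M prob_algebra (H (Suc i))"
  proof -
    have eq: "D i \<rightarrow>\<^sub>M prob_algebra (H (Suc i)) = H i \<rightarrow>\<^sub>M prob_algebra (H (Suc i))"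
      by (rule measurable_cong_sets[OF D_sets refl]) (use i in simp)
    show ?thesis unfolding eq by (rule NK_meas[OF i])
  qed
  have G: "(AE h in D i. integrable (NK i h) F) \<and> integrable (D i) (\<lambda>h. integral\<^sup>L (NK i h) F)
     \<and> integral\<^sup>L (D i \<bind> NK i) F = (\<integral>h. integral\<^sup>L (NK i h) F \<partial>D i)"
    by (rule GB[OF NKD D_prob F]) (use i int2 D_Suc[OF i] in auto)
  have sp: "space (D i) = space (H i)" using D_spc i by simp
  have ie: "integrable (NK i h) F = integrable (SL i h) (\<lambda>ob. F (h(i := ob)))" if h: "h \<in> space (D i)" for h
    unfolding NK_def using integrable_distr_eq[OF upd_meas_SL[OF i] F] h sp by simp
  have ee: "integral\<^sup>L (NK i h) F = (\<integral>ob. F (h(i := ob)) \<partial>SL i h)" if h: "h \<in> space (D i)" for h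
    unfolding NK_def using integral_distr[OF upd_meas_SL[OF i] F] h sp by simp
  have A1: "AE h in D i. integrable (SL i h) (\<lambda>ob. F (h(i := ob)))"
    using G by (auto elim!: AE_mp intro!: AE_I2 simp: ie)
  have A2: "integrable (D i) (\<lambda>h. \<integral>ob. F (h(i := ob)) \<partial>SL i h)"
    using G Bochner_Integration.integrable_cong[OF refl ee, of "D i" "\<lambda>h. h"] by auto
  have A3: "(\<integral>h. integral\<^sup>L (NK i h) F \<partial>D i) = (\<integral>h. (\<integral>ob. F (h(i := ob)) \<partial>SL i h) \<partial>D i)"
    by (rule Bochner_Integration.integral_cong[OF refl ee])
  show ?thesis using A1 A2 A3 G eq1 D_Suc[OF i] by simp
qed


definition KA :: "'x \<Rightarrow> 'a \<Rightarrow> ('x, 'a) obs measure" where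
  "KA x a = bind (Gam x a) (\<lambda>y. return OB (x, a, y))"

definition KX :: "nat \<Rightarrow> ('x, 'a) hist \<Rightarrow> 'x \<Rightarrow> ('x, 'a) obs measure" where
  "KX i h x = bind (density MA (\<lambda>a. ennreal (pol i x h a))) (KA x)"

lemma SL_KX: "SL i h = bind Xi (KX i h)"
  unfolding step_law_def KX_def KA_def ..

lemma KA_meas: "(\<lambda>(x, a). KA x a) \<in> Xi \<Otimes>\<^sub>M MA \<rightarrow>\<^sub>M prob_algebra OB"
  unfolding KA_def obsM_def by measurable

lemma Gam_sets: "x \<in> space Xi \<Longrightarrow> a \<in> space MA \<Longrightarrow> sets (Gam x a) = sets borel"
  using measurable_space[OF Gam_kernel, of "(x, a)"] by (simp add: space_prob_algebra space_pair_measure)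

lemma Gam_prob: "x \<in> space Xi \<Longrightarrow> a \<in> space MA \<Longrightarrow> prob_space (Gam x a)"
  using measurable_space[OF Gam_kernel, of "(x, a)"] by (simp add: space_prob_algebra space_pair_measure)

lemma KA_distr: assumes x: "x \<in> space Xi" and a: "a \<in> space MA"
  shows "KA x a = distr (Gam x a) OB (\<lambda>y. (x, a, y))"
proof -
  have ne: "space (Gam x a) \<noteq> {}" using Gam_prob[OF x a] prob_space.not_empty by blast
  have m: "(\<lambda>y. (x, a, y)) \<in> Gam x a \<rightarrow>\<^sub>M OB"
    unfolding measurable_cong_sets[OF Gam_sets[OF x a] refl] obsM_def
    by (intro measurable_Pair measurable_const measurable_ident_sets x a refl)
  show ?thesis unfolding KA_def by (rule bind_return_distr'[OF ne m])
qed

lemma KA_int: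
  fixes F :: "('x, 'a) obs \<Rightarrow> real"
  assumes x: "x \<in> space Xi" and a: "a \<in> space MA" and F[measurable]: "F \<in> borel_measurable OB"
  shows "integrable (KA x a) F = integrable (Gam x a) (\<lambda>y. F (x, a, y))"
    and "integral\<^sup>L (KA x a) F = (\<integral>y. F (x, a, y) \<partial>Gam x a)"
proof -
  have m: "(\<lambda>y. (x, a, y)) \<in> Gam x a \<rightarrow>\<^sub>M OB"
    unfolding measurable_cong_sets[OF Gam_sets[OF x a] refl] obsM_def
    by (intro measurable_Pair measurable_const measurable_ident_sets x a refl)
  show "integrable (KA x a) F = integrable (Gam x a) (\<lambda>y. F (x, a, y))"
    unfolding KA_distr[OF x a] by (rule integrable_distr_eq[OF m F])
  show "integral\<^sup>L (KA x a) F = (\<integral>y. F (x, a, y) \<partial>Gam x a)"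
    unfolding KA_distr[OF x a] by (rule integral_distr[OF m F])
qed

lemma dens_kernel2: assumes i: "i < n"
  shows "(\<lambda>w. density MA (\<lambda>a. ennreal (pol i (snd w) (fst w) a))) \<in> (H i \<Otimes>\<^sub>M Xi) \<rightarrow>\<^sub>M prob_algebra MA"
proof -
  note pc[measurable (raw)] = pol_comp[OF i]
  show ?thesis
    by (rule density_kernel[OF MA_sf]) (auto simp: space_pair_measure intro!: pi_nonneg[OF i] pi_dens[OF i])
qed

lemma KX_meas2: assumes i: "i < n" shows "(\<lambda>(h, x). KX i h x) \<in> (H i \<Otimes>\<^sub>M Xi) \<rightarrow>\<^sub>M prob_algebra OB"
proof -
  have K2: "(\<lambda>(w, a). KA (snd w) a) \<in> (H i \<Otimes>\<^sub>M Xi) \<Otimes>\<^sub>M MA \<rightarrow>\<^sub>M prob_algebra OB"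
  proof -
    have f: "(\<lambda>w. (snd (fst w), snd w)) \<in> (H i \<Otimes>\<^sub>M Xi) \<Otimes>\<^sub>M MA \<rightarrow>\<^sub>M Xi \<Otimes>\<^sub>M MA" by measurable
    show ?thesis using measurable_compose[OF f KA_meas] by (simp add: split_beta')
  qed
  show ?thesis unfolding KX_def
    using measurable_bind_prob_space2[OF dens_kernel2[OF i] K2] by (simp add: split_beta')
qed

lemma KX_meas: assumes i: "i < n" and h: "h \<in> space (H i)" shows "KX i h \<in> Xi \<rightarrow>\<^sub>M prob_algebra OB"
  using measurable_Pair2[OF KX_meas2[OF i] h] by simp

lemma pol_meas_x: assumes i: "i < n" and h: "h \<in> space (H i)" and x: "x \<in> space Xi"
  shows "(\<lambda>a. pol i x h a) \<in> borel_measurable MA"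
proof -
  note pc[measurable (raw)] = pol_comp[OF i]
  show ?thesis using h x by measurable
qed

lemma dens_prob: assumes i: "i < n" and h: "h \<in> space (H i)" and x: "x \<in> space Xi"
  shows "prob_space (density MA (\<lambda>a. ennreal (pol i x h a)))"
  using measurable_space[OF dens_kernel2[OF i], of "(h, x)"] h x
  by (simp add: space_prob_algebra space_pair_measure)

lemma KAx_meas: assumes x: "x \<in> space Xi" shows "KA x \<in> MA \<rightarrow>\<^sub>M prob_algebra OB"
  using measurable_Pair2[OF KA_meas x] by simp


lemma Gint_meas:
  fixes F :: "('x, 'a) obs \<Rightarrow> real"
  assumes F[measurable]: "F \<in> borel_measurable OB"
  shows "(\<lambda>(x, a). \<integral>y. F (x, a, y) \<partial>Gam x a) \<in> borel_measurable (Xi \<Otimes>\<^sub>M MA)"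
proof -
  have m: "(\<lambda>w. integral\<^sup>L (KA (fst w) (snd w)) F) \<in> borel_measurable (Xi \<Otimes>\<^sub>M MA)"
    using measurable_compose[OF measurable_prob_algebraD[OF KA_meas] integral_measurable_subprob_algebra[OF F]]
    by (simp add: split_beta')
  show ?thesis
    by (rule measurable_cong[THEN iffD1, OF _ m]) (auto simp: space_pair_measure KA_int(2)[OF _ _ F])
qed

lemma expand:
  fixes F :: "('x, 'a) obs \<Rightarrow> real"
  assumes i: "i < n" and h: "h \<in> space (H i)" and F[measurable]: "F \<in> borel_measurable OB"
    and int: "integrable (SL i h) F"
  shows "(AE x in Xi. integrable MA (\<lambda>a. pol i x h a * (\<integral>y. F (x, a, y) \<partial>Gam x a)))
     \<and> integrable Xi (\<lambda>x. \<integral>a. pol i x h a * (\<integral>y. F (x, a, y) \<partial>Gam x a) \<partial>MA)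
     \<and> integral\<^sup>L (SL i h) F = (\<integral>x. (\<integral>a. pol i x h a * (\<integral>y. F (x, a, y) \<partial>Gam x a) \<partial>MA) \<partial>Xi)"
proof -
  note pc[measurable (raw)] = pol_comp[OF i]
  have hm[measurable]: "h \<in> space (H i)" by (rule h)
  note gm[measurable] = Gint_meas[OF F]
  have G1: "(AE x in Xi. integrable (KX i h x) F) \<and> integrable Xi (\<lambda>x. integral\<^sup>L (KX i h x) F)
     \<and> integral\<^sup>L (Xi \<bind> KX i h) F = (\<integral>x. integral\<^sup>L (KX i h x) F \<partial>Xi)"
    by (rule GB[OF KX_meas[OF i h] Xi_prob F]) (use int SL_KX in simp)
  have xlem: "integrable MA (\<lambda>a. pol i x h a * (\<integral>y. F (x, a, y) \<partial>Gam x a))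
     \<and> integral\<^sup>L (KX i h x) F = (\<integral>a. pol i x h a * (\<integral>y. F (x, a, y) \<partial>Gam x a) \<partial>MA)"
    if x: "x \<in> space Xi" and ix: "integrable (KX i h x) F" for x
  proof -
    have xm[measurable]: "x \<in> space Xi" by (rule x)
    let ?d = "density MA (\<lambda>a. ennreal (pol i x h a))"
    have KAd: "KA x \<in> ?d \<rightarrow>\<^sub>M prob_algebra OB"
      unfolding measurable_cong_sets[OF sets_density refl] by (rule KAx_meas[OF x])
    have G2: "(AE a in ?d. integrable (KA x a) F) \<and> integrable ?d (\<lambda>a. integral\<^sup>L (KA x a) F)
     \<and> integral\<^sup>L (?d \<bind> KA x) F = (\<integral>a. integral\<^sup>L (KA x a) F \<partial>?d)"
      by (rule GB[OF KAd dens_prob[OF i h x] F]) (use ix in \<open>simp add: KX_def\<close>)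
    have gma: "(\<lambda>a. \<integral>y. F (x, a, y) \<partial>Gam x a) \<in> borel_measurable MA" by measurable
    have i1: "integrable ?d (\<lambda>a. \<integral>y. F (x, a, y) \<partial>Gam x a)"
      using G2 Bochner_Integration.integrable_cong[OF refl KA_int(2)[OF x _ F], of ?d] by simp
    have e1: "(\<integral>a. integral\<^sup>L (KA x a) F \<partial>?d) = (\<integral>a. (\<integral>y. F (x, a, y) \<partial>Gam x a) \<partial>?d)"
      by (rule Bochner_Integration.integral_cong[OF refl]) (simp add: KA_int(2)[OF x _ F])
    have pnn: "AE a in MA. 0 \<le> pol i x h a" using pi_nonneg[OF i x h] by auto
    have i2: "integrable MA (\<lambda>a. pol i x h a * (\<integral>y. F (x, a, y) \<partial>Gam x a))"
      using i1 integrable_density[OF gma pol_meas_x[OF i h x] pnn] by simp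
    have e2: "(\<integral>a. (\<integral>y. F (x, a, y) \<partial>Gam x a) \<partial>?d) = (\<integral>a. pol i x h a * (\<integral>y. F (x, a, y) \<partial>Gam x a) \<partial>MA)"
      using integral_density[OF gma pol_meas_x[OF i h x] pnn] by simp
    show ?thesis using i2 e1 e2 G2 by (simp add: KX_def)
  qed
  have AEi: "AE x in Xi. integrable (KX i h x) F" using G1 by simp
  have A1: "AE x in Xi. integrable MA (\<lambda>a. pol i x h a * (\<integral>y. F (x, a, y) \<partial>Gam x a))"
    using AEi by (rule AE_mp) (auto intro!: AE_I2 dest: xlem)
  have AEe: "AE x in Xi. integral\<^sup>L (KX i h x) F = (\<integral>a. pol i x h a * (\<integral>y. F (x, a, y) \<partial>Gam x a) \<partial>MA)"
    using AEi by (rule AE_mp) (auto intro!: AE_I2 dest: xlem)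
  have om: "(\<lambda>x. \<integral>a. pol i x h a * (\<integral>y. F (x, a, y) \<partial>Gam x a) \<partial>MA) \<in> borel_measurable Xi"
    by (rule sigma_finite_measure.borel_measurable_lebesgue_integral[OF MA_sf]) measurable
  have A2: "integrable Xi (\<lambda>x. \<integral>a. pol i x h a * (\<integral>y. F (x, a, y) \<partial>Gam x a) \<partial>MA)"
    by (rule integrable_cong_AE_imp[OF _ om AEe]) (use G1 in simp)
  have A3: "integral\<^sup>L (SL i h) F = (\<integral>x. (\<integral>a. pol i x h a * (\<integral>y. F (x, a, y) \<partial>Gam x a) \<partial>MA) \<partial>Xi)"
    unfolding SL_KX using G1 by (simp add: integral_cong_AE[OF _ om AEe] borel_measurable_integrable)
  show ?thesis using A1 A2 A3 by simp
qed


lemma Gam_y: assumes x: "x \<in> space Xi" and a: "a \<in> space MA"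
  shows "integrable (Gam x a) (\<lambda>y. y)" and "(\<integral>y. y \<partial>Gam x a) = mu_star Gam x a"
proof -
  interpret G: prob_space "Gam x a" by (rule Gam_prob[OF x a])
  have m: "(\<lambda>y::real. y) \<in> borel_measurable (Gam x a)"
    unfolding measurable_cong_sets[OF Gam_sets[OF x a] refl] by simp
  show "integrable (Gam x a) (\<lambda>y. y)" by (rule G.square_integrable_imp_integrable[OF m Gam_var[OF x a]])
  show "(\<integral>y. y \<partial>Gam x a) = mu_star Gam x a" by (simp add: mu_star_def)
qed

lemma Gam_sq: assumes x: "x \<in> space Xi" and a: "a \<in> space MA"
  shows "integrable (Gam x a) (\<lambda>y. (y - c)\<^sup>2)"
    and "(\<integral>y. (y - c)\<^sup>2 \<partial>Gam x a) = (sigma_fn Gam x a)\<^sup>2 + (mu_star Gam x a - c)\<^sup>2"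
proof -
  interpret G: prob_space "Gam x a" by (rule Gam_prob[OF x a])
  note y = Gam_y[OF x a]
  have sq: "(y - c)\<^sup>2 = y\<^sup>2 - 2 * c * y + c\<^sup>2" for y c :: real by (simp add: power2_eq_square algebra_simps)
  show i1: "integrable (Gam x a) (\<lambda>y. (y - c)\<^sup>2)" for c
    unfolding sq using Gam_var[OF x a] y by auto
  have e: "(\<integral>y. (y - c)\<^sup>2 \<partial>Gam x a) = (\<integral>y. y\<^sup>2 \<partial>Gam x a) - 2 * c * mu_star Gam x a + c\<^sup>2" for c
    unfolding sq using Gam_var[OF x a] y by (simp add: G.prob_space)
  have nn: "0 \<le> (\<integral>y. (y - mu_star Gam x a)\<^sup>2 \<partial>Gam x a)" by (intro integral_nonneg_AE) auto
  have "(sigma_fn Gam x a)\<^sup>2 = (\<integral>y. (y - mu_star Gam x a)\<^sup>2 \<partial>Gam x a)"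
    unfolding sigma_fn_def using nn by simp
  then show "(\<integral>y. (y - c)\<^sup>2 \<partial>Gam x a) = (sigma_fn Gam x a)\<^sup>2 + (mu_star Gam x a - c)\<^sup>2"
    using e[of c] e[of "mu_star Gam x a"] by (simp add: power2_eq_square algebra_simps)
qed

lemma pol_int: assumes i: "i < n" and h: "h \<in> space (H i)" and x: "x \<in> space Xi"
  shows "integrable MA (\<lambda>a. pol i x h a)" and "(\<integral>a. pol i x h a \<partial>MA) = 1"
proof -
  have m: "(\<lambda>a. pol i x h a) \<in> borel_measurable MA" by (rule pol_meas_x[OF i h x])
  have nn: "AE a in MA. 0 \<le> pol i x h a" using pi_nonneg[OF i x h] by auto
  show "integrable MA (\<lambda>a. pol i x h a)"
    by (rule integrableI_nonneg[OF m nn]) (simp add: pi_dens[OF i x h])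
  show "(\<integral>a. pol i x h a \<partial>MA) = 1"
    by (simp add: integral_eq_nn_integral[OF m nn] pi_dens[OF i x h])
qed

lemma pol_g: assumes i: "i < n" and h: "h \<in> space (H i)" and x: "x \<in> space Xi" and a: "a \<in> space MA"
  shows "pol i x h a * (g x a / pol i x h a) = g x a"
  using overlap[OF i x h a] by (cases "g x a = 0") auto


lemma mu_star_meas[measurable]: "(\<lambda>(x, a). mu_star Gam x a) \<in> borel_measurable (Xi \<Otimes>\<^sub>M MA)"
proof -
  have "(\<lambda>ob::('x,'a) obs. snd (snd ob)) \<in> borel_measurable OB" unfolding obsM_def by measurable
  from Gint_meas[OF this] show ?thesis by (simp add: mu_star_def)
qed

lemma mu_star_comp[measurable (raw)]:
  assumes "f \<in> M \<rightarrow>\<^sub>M Xi" "k \<in> M \<rightarrow>\<^sub>M MA"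
  shows "(\<lambda>w. mu_star Gam (f w) (k w)) \<in> borel_measurable M"
  using measurable_compose[OF measurable_Pair[OF assms] mu_star_meas] by simp

lemma sigma_meas[measurable]: "(\<lambda>(x, a). sigma_fn Gam x a) \<in> borel_measurable (Xi \<Otimes>\<^sub>M MA)"
proof -
  have "(\<lambda>ob::('x,'a) obs. (snd (snd ob) - mu_star Gam (fst ob) (fst (snd ob)))\<^sup>2) \<in> borel_measurable OB"
    unfolding obsM_def by measurable
  from Gint_meas[OF this] have "(\<lambda>(x, a). \<integral>y. (y - mu_star Gam x a)\<^sup>2 \<partial>Gam x a) \<in> borel_measurable (Xi \<Otimes>\<^sub>M MA)"
    by simp
  then show ?thesis unfolding sigma_fn_def by (simp add: split_beta')
qed

lemma sigma_comp[measurable (raw)]: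
  assumes "f \<in> M \<rightarrow>\<^sub>M Xi" "k \<in> M \<rightarrow>\<^sub>M MA"
  shows "(\<lambda>w. sigma_fn Gam (f w) (k w)) \<in> borel_measurable M"
  using measurable_compose[OF measurable_Pair[OF assms] sigma_meas] by simp

definition "mm x = innerA MA (g x) (mu_star Gam x)"

lemma mm_meas[measurable]: "mm \<in> borel_measurable Xi"
  unfolding mm_def innerA_def
  by (rule sigma_finite_measure.borel_measurable_lebesgue_integral[OF MA_sf]) measurable

definition sL :: "('x \<Rightarrow> 'a \<Rightarrow> real) \<Rightarrow> nat \<Rightarrow> ('x, 'a) hist \<Rightarrow> ('x, 'a) obs \<Rightarrow> real" where
  "sL mu i h ob = (case ob of (x, a, y) \<Rightarrow> (g x a)\<^sup>2 / (pol i x h a)\<^sup>2 * (y - mu x a)\<^sup>2)"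

definition sS :: "('x \<Rightarrow> 'a \<Rightarrow> real) \<Rightarrow> nat \<Rightarrow> ('x, 'a) hist \<Rightarrow> ('x, 'a) obs \<Rightarrow> real" where
  "sS mu i h ob = (case ob of (x, a, y) \<Rightarrow> (g x a)\<^sup>2 * (sigma_fn Gam x a)\<^sup>2 / (pol i x h a)\<^sup>2
       + (g x a)\<^sup>2 * (mu x a - mu_star Gam x a)\<^sup>2 / (pol i x h a)\<^sup>2)"

lemma stepC:
  assumes i: "i < n" and h: "h \<in> space (H i)" and mum[measurable]: "(\<lambda>(x, a). mu x a) \<in> borel_measurable (Xi \<Otimes>\<^sub>M MA)"
    and iL: "integrable (SL i h) (sL mu i h)" and iS: "integrable (SL i h) (sS mu i h)"
  shows "integral\<^sup>L (SL i h) (sL mu i h) = integral\<^sup>L (SL i h) (sS mu i h)"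
proof -
  note pc[measurable (raw)] = pol_comp[OF i]
  have hm[measurable]: "h \<in> space (H i)" by (rule h)
  have mc[measurable (raw)]: "(\<lambda>w. mu (f w) (k w)) \<in> borel_measurable M" if "f \<in> M \<rightarrow>\<^sub>M Xi" "k \<in> M \<rightarrow>\<^sub>M MA" for f k and M :: "'z measure"
    using measurable_compose[OF measurable_Pair[OF that] mum] by simp
  have mL: "sL mu i h \<in> borel_measurable OB" unfolding sL_def obsM_def by (simp add: split_beta') measurable
  have mS: "sS mu i h \<in> borel_measurable OB" unfolding sS_def obsM_def by (simp add: split_beta') measurable
  have eq: "(\<integral>y. sL mu i h (x, a, y) \<partial>Gam x a) = (\<integral>y. sS mu i h (x, a, y) \<partial>Gam x a)"
    if x: "x \<in> space Xi" and a: "a \<in> space MA" for x a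
  proof -
    interpret G: prob_space "Gam x a" by (rule Gam_prob[OF x a])
    have "(\<integral>y. sL mu i h (x, a, y) \<partial>Gam x a) = (g x a)\<^sup>2 / (pol i x h a)\<^sup>2 * ((sigma_fn Gam x a)\<^sup>2 + (mu_star Gam x a - mu x a)\<^sup>2)"
      unfolding sL_def using Gam_sq[OF x a, of "mu x a"] by simp
    also have "\<dots> = sS mu i h (x, a, 0)"
      unfolding sS_def by (simp add: divide_inverse power2_eq_square algebra_simps)
    also have "\<dots> = (\<integral>y. sS mu i h (x, a, y) \<partial>Gam x a)" unfolding sS_def by (simp add: G.prob_space)
    finally show ?thesis .
  qed
  have "integral\<^sup>L (SL i h) (sL mu i h) = (\<integral>x. (\<integral>a. pol i x h a * (\<integral>y. sL mu i h (x, a, y) \<partial>Gam x a) \<partial>MA) \<partial>Xi)"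
    using expand[OF i h mL iL] by simp
  also have "\<dots> = (\<integral>x. (\<integral>a. pol i x h a * (\<integral>y. sS mu i h (x, a, y) \<partial>Gam x a) \<partial>MA) \<partial>Xi)"
    using eq by (intro Bochner_Integration.integral_cong refl) simp
  also have "\<dots> = integral\<^sup>L (SL i h) (sS mu i h)"
    using expand[OF i h mS iS] by simp
  finally show ?thesis .
qed


lemma mm_int: assumes it: "integrable Xi (\<lambda>x. (innerA MA (g x) (mu_star Gam x))\<^sup>2)"
  shows "integrable Xi mm" and "tau Xi MA Gam g = integral\<^sup>L Xi mm"
proof -
  interpret X: prob_space Xi by (rule Xi_prob)
  show "integrable Xi mm" using X.square_integrable_imp_integrable[OF mm_meas] it by (simp add: mm_def)
  show "tau Xi MA Gam g = integral\<^sup>L Xi mm" unfolding tau_def mm_def[abs_def] ..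
qed

end

locale model2 = model +
  fixes muhat
  assumes muhat_meas: "\<And>i. i < n \<Longrightarrow>
       (\<lambda>(h, x, a). muhat i h x a :: real) \<in> borel_measurable (histM Xi MA i \<Otimes>\<^sub>M (Xi \<Otimes>\<^sub>M MA))"
    and int_gmu: "\<And>x. x \<in> space Xi \<Longrightarrow> integrable MA (\<lambda>a. g x a * mu_star Gam x a)"
    and int_gmuhat: "\<And>i h x. i < n \<Longrightarrow> h \<in> space (histM Xi MA i) \<Longrightarrow> x \<in> space Xi
       \<Longrightarrow> integrable MA (\<lambda>a. g x a * muhat i h x a)"
    and int_target: "integrable Xi (\<lambda>x. (innerA MA (g x) (mu_star Gam x))\<^sup>2)"
begin

abbreviation "tt \<equiv> tau Xi MA Gam g"

definition "T2 i h x = innerA MA (g x) (muhat i h x)"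

definition sZ where
  "sZ i h ob = (case ob of (x, a, y) \<Rightarrow> g x a / pol i x h a * (y - muhat i h x a))"

definition sxi where
  "sxi i h ob = (case ob of (x, a, y) \<Rightarrow> g x a / pol i x h a * (y - muhat i h x a) + T2 i h x - tt)"

lemma muhat_comp[measurable (raw)]:
  assumes i: "i < n" and "hh \<in> M \<rightarrow>\<^sub>M H i" "f \<in> M \<rightarrow>\<^sub>M Xi" "k \<in> M \<rightarrow>\<^sub>M MA"
  shows "(\<lambda>w. muhat i (hh w) (f w) (k w)) \<in> borel_measurable M"
  using measurable_compose[OF measurable_Pair[OF assms(2) measurable_Pair[OF assms(3,4)]] muhat_meas[OF i]] by simp

lemma T2_meas2: assumes i: "i < n" shows "(\<lambda>(h, x). T2 i h x) \<in> borel_measurable (H i \<Otimes>\<^sub>M Xi)"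
proof -
  note mc[measurable (raw)] = muhat_comp[OF i]
  have "(\<lambda>w. \<integral>a. g (snd w) a * muhat i (fst w) (snd w) a \<partial>MA) \<in> borel_measurable (H i \<Otimes>\<^sub>M Xi)"
    by (rule sigma_finite_measure.borel_measurable_lebesgue_integral[OF MA_sf]) measurable
  then show ?thesis by (simp add: T2_def innerA_def split_beta')
qed

lemma T2_comp[measurable (raw)]:
  assumes i: "i < n" and "hh \<in> M \<rightarrow>\<^sub>M H i" "f \<in> M \<rightarrow>\<^sub>M Xi"
  shows "(\<lambda>w. T2 i (hh w) (f w)) \<in> borel_measurable M"
  using measurable_compose[OF measurable_Pair[OF assms(2,3)] T2_meas2[OF i]] by simp

lemma sZ_meas: "i < n \<Longrightarrow> h \<in> space (H i) \<Longrightarrow> sZ i h \<in> borel_measurable OB"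
  unfolding sZ_def obsM_def by (simp add: split_beta') (measurable, auto intro: pol_comp)

lemma sxi_meas: "i < n \<Longrightarrow> h \<in> space (H i) \<Longrightarrow> sxi i h \<in> borel_measurable OB"
  unfolding sxi_def obsM_def by (simp add: split_beta') (measurable, auto intro: pol_comp)


lemma Gam_aff: assumes x: "x \<in> space Xi" and a: "a \<in> space MA"
  shows "(\<integral>y. c * (y - d) + e \<partial>Gam x a) = c * (mu_star Gam x a - d) + e"
    and "integrable (Gam x a) (\<lambda>y. c * (y - d) + e)"
proof -
  interpret G: prob_space "Gam x a" by (rule Gam_prob[OF x a])
  note y = Gam_y[OF x a]
  have r: "c * (y - d) + e = c * y + (e - c * d)" for y by (simp add: algebra_simps)
  show "integrable (Gam x a) (\<lambda>y. c * (y - d) + e)" unfolding r using y by auto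
  show "(\<integral>y. c * (y - d) + e \<partial>Gam x a) = c * (mu_star Gam x a - d) + e"
    unfolding r using y by (simp add: G.prob_space algebra_simps)
qed

lemma stepA:
  assumes i: "i < n" and h: "h \<in> space (H i)" and int: "integrable (SL i h) (sxi i h)"
  shows "integral\<^sup>L (SL i h) (sxi i h) = 0"
proof -
  have inner: "(\<integral>a. pol i x h a * (\<integral>y. sxi i h (x, a, y) \<partial>Gam x a) \<partial>MA) = mm x - tt"
    if x: "x \<in> space Xi" for x
  proof -
    have e1: "pol i x h a * (\<integral>y. sxi i h (x, a, y) \<partial>Gam x a)
       = g x a * mu_star Gam x a - g x a * muhat i h x a + pol i x h a * (T2 i h x - tt)"
      if a: "a \<in> space MA" for a
    proof -
      have "pol i x h a * (\<integral>y. sxi i h (x, a, y) \<partial>Gam x a)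
         = pol i x h a * ((g x a / pol i x h a) * (mu_star Gam x a - muhat i h x a) + (T2 i h x - tt))"
        unfolding sxi_def using Gam_aff(1)[OF x a, of "g x a / pol i x h a" "muhat i h x a" "T2 i h x - tt"]
        by (simp add: add_diff_eq)
      also have "\<dots> = (pol i x h a * (g x a / pol i x h a)) * (mu_star Gam x a - muhat i h x a) + pol i x h a * (T2 i h x - tt)"
        by (simp add: algebra_simps)
      also have "\<dots> = g x a * mu_star Gam x a - g x a * muhat i h x a + pol i x h a * (T2 i h x - tt)"
        unfolding pol_g[OF i h x a] by (simp add: algebra_simps)
      finally show ?thesis .
    qed
    have "(\<integral>a. pol i x h a * (\<integral>y. sxi i h (x, a, y) \<partial>Gam x a) \<partial>MA)
       = (\<integral>a. g x a * mu_star Gam x a - g x a * muhat i h x a + pol i x h a * (T2 i h x - tt) \<partial>MA)"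
      using e1 by (intro Bochner_Integration.integral_cong) auto
    also have "\<dots> = mm x - T2 i h x + (T2 i h x - tt)"
      using int_gmu[OF x] int_gmuhat[OF i h x] pol_int[OF i h x]
      by (simp add: mm_def T2_def innerA_def)
    finally show ?thesis by simp
  qed
  have "integral\<^sup>L (SL i h) (sxi i h) = (\<integral>x. (\<integral>a. pol i x h a * (\<integral>y. sxi i h (x, a, y) \<partial>Gam x a) \<partial>MA) \<partial>Xi)"
    using expand[OF i h sxi_meas[OF i h] int] by simp
  also have "\<dots> = (\<integral>x. mm x - tt \<partial>Xi)" using inner by (intro Bochner_Integration.integral_cong) auto
  also have "\<dots> = 0"
  proof -
    interpret X: prob_space Xi by (rule Xi_prob)
    show ?thesis using mm_int[OF int_target] by (simp add: X.prob_space)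
  qed
  finally show ?thesis .
qed


lemma var_int: "integrable Xi (\<lambda>x. (mm x - tt)\<^sup>2)"
proof -
  interpret X: prob_space Xi by (rule Xi_prob)
  have r: "(mm x - tt)\<^sup>2 = (innerA MA (g x) (mu_star Gam x))\<^sup>2 - 2 * tt * mm x + tt\<^sup>2" for x
    by (simp add: mm_def power2_eq_square algebra_simps)
  show ?thesis unfolding r using int_target mm_int[OF int_target] by auto
qed

lemma stepB:
  assumes i: "i < n" and h: "h \<in> space (H i)"
    and int1: "integrable (SL i h) (\<lambda>ob. (sxi i h ob)\<^sup>2)" and int2: "integrable (SL i h) (\<lambda>ob. (sZ i h ob)\<^sup>2)"
  shows "integral\<^sup>L (SL i h) (\<lambda>ob. (sxi i h ob)\<^sup>2) \<le> integral\<^sup>L (SL i h) (\<lambda>ob. (sZ i h ob)\<^sup>2) + (\<integral>x. (mm x - tt)\<^sup>2 \<partial>Xi)"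
proof -
  note sm[measurable] = sxi_meas[OF i h] sZ_meas[OF i h]
  have m1: "(\<lambda>ob. (sxi i h ob)\<^sup>2) \<in> borel_measurable OB" by measurable
  have m2: "(\<lambda>ob. (sZ i h ob)\<^sup>2) \<in> borel_measurable OB" by measurable
  note E1 = expand[OF i h m1 int1] and E2 = expand[OF i h m2 int2]
  define A1 where "A1 x a = pol i x h a * (\<integral>y. (sxi i h (x, a, y))\<^sup>2 \<partial>Gam x a)" for x a
  define A2 where "A2 x a = pol i x h a * (\<integral>y. (sZ i h (x, a, y))\<^sup>2 \<partial>Gam x a)" for x a
  have pw: "A1 x a = A2 x a + 2 * (T2 i h x - tt) * (g x a * mu_star Gam x a - g x a * muhat i h x a)
      + (T2 i h x - tt)\<^sup>2 * pol i x h a" if x: "x \<in> space Xi" and a: "a \<in> space MA" for x a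
  proof -
    define c1 where "c1 = g x a / pol i x h a"
    define e where "e = T2 i h x - tt"
    define d where "d = muhat i h x a"
    interpret G: prob_space "Gam x a" by (rule Gam_prob[OF x a])
    have sx: "(sxi i h (x, a, y))\<^sup>2 = c1\<^sup>2 * (y - d)\<^sup>2 + ((2 * e * c1) * (y - d) + e\<^sup>2)" for y
      unfolding sxi_def c1_def e_def d_def by (simp add: divide_inverse power2_eq_square algebra_simps)
    have sz: "(sZ i h (x, a, y))\<^sup>2 = c1\<^sup>2 * (y - d)\<^sup>2" for y
      unfolding sZ_def c1_def d_def by (simp add: divide_inverse power2_eq_square algebra_simps)
    have q: "integrable (Gam x a) (\<lambda>y. (y - d)\<^sup>2)" by (rule Gam_sq(1)[OF x a])
    have I1: "(\<integral>y. (sxi i h (x, a, y))\<^sup>2 \<partial>Gam x a) = c1\<^sup>2 * (\<integral>y. (y - d)\<^sup>2 \<partial>Gam x a) + ((2 * e * c1) * (mu_star Gam x a - d) + e\<^sup>2)"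
      unfolding sx using q Gam_aff[OF x a, of "2 * e * c1" d "e\<^sup>2"] by simp
    have I2: "(\<integral>y. (sZ i h (x, a, y))\<^sup>2 \<partial>Gam x a) = c1\<^sup>2 * (\<integral>y. (y - d)\<^sup>2 \<partial>Gam x a)"
      unfolding sz by simp
    have pc: "pol i x h a * c1 = g x a" unfolding c1_def by (rule pol_g[OF i h x a])
    have "A1 x a = A2 x a + 2 * e * (pol i x h a * c1) * (mu_star Gam x a - d) + e\<^sup>2 * pol i x h a"
      unfolding A1_def A2_def I1 I2 by (simp add: algebra_simps)
    then show ?thesis unfolding pc e_def d_def by (simp add: algebra_simps)
  qed
  have xin: "(\<integral>a. A1 x a \<partial>MA) \<le> (\<integral>a. A2 x a \<partial>MA) + (mm x - tt)\<^sup>2"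
    if x: "x \<in> space Xi" and i2: "integrable MA (A2 x)" for x
  proof -
    have "(\<integral>a. A1 x a \<partial>MA) = (\<integral>a. A2 x a + 2 * (T2 i h x - tt) * (g x a * mu_star Gam x a - g x a * muhat i h x a)
      + (T2 i h x - tt)\<^sup>2 * pol i x h a \<partial>MA)"
      using pw[OF x] by (intro Bochner_Integration.integral_cong) auto
    also have "\<dots> = (\<integral>a. A2 x a \<partial>MA) + 2 * (T2 i h x - tt) * (mm x - T2 i h x) + (T2 i h x - tt)\<^sup>2"
      using i2 int_gmu[OF x] int_gmuhat[OF i h x] pol_int[OF i h x]
      by (simp add: mm_def T2_def innerA_def)
    also have "\<dots> \<le> (\<integral>a. A2 x a \<partial>MA) + (mm x - tt)\<^sup>2"
    proof -
      have "(mm x - tt)\<^sup>2 - (2 * (T2 i h x - tt) * (mm x - T2 i h x) + (T2 i h x - tt)\<^sup>2) = (mm x - T2 i h x)\<^sup>2"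
        by (simp add: power2_eq_square algebra_simps)
      then show ?thesis by (smt (verit) zero_le_power2)
    qed
    finally show ?thesis .
  qed
  have "integral\<^sup>L (SL i h) (\<lambda>ob. (sxi i h ob)\<^sup>2) = (\<integral>x. (\<integral>a. A1 x a \<partial>MA) \<partial>Xi)"
    using E1 by (simp add: A1_def)
  also have "\<dots> \<le> (\<integral>x. (\<integral>a. A2 x a \<partial>MA) + (mm x - tt)\<^sup>2 \<partial>Xi)"
  proof (rule integral_mono_AE)
    show "integrable Xi (\<lambda>x. \<integral>a. A1 x a \<partial>MA)" using E1 by (simp add: A1_def)
    show "integrable Xi (\<lambda>x. (\<integral>a. A2 x a \<partial>MA) + (mm x - tt)\<^sup>2)"
      using E2 var_int by (simp add: A2_def)
    have "AE x in Xi. integrable MA (A2 x)" using E2 by (simp add: A2_def[abs_def])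
    then show "AE x in Xi. (\<integral>a. A1 x a \<partial>MA) \<le> (\<integral>a. A2 x a \<partial>MA) + (mm x - tt)\<^sup>2"
      by (rule AE_mp) (auto intro!: AE_I2 xin)
  qed
  also have "\<dots> = integral\<^sup>L (SL i h) (\<lambda>ob. (sZ i h ob)\<^sup>2) + (\<integral>x. (mm x - tt)\<^sup>2 \<partial>Xi)"
    using E2 var_int by (simp add: A2_def)
  finally show ?thesis .
qed


definition "Zh i \<omega> = g (Xo \<omega> i) (Ao \<omega> i) / pol i (Xo \<omega> i) (past \<omega> i) (Ao \<omega> i)
   * (Yo \<omega> i - muhat i (past \<omega> i) (Xo \<omega> i) (Ao \<omega> i))"
definition "T2h i \<omega> = innerA MA (g (Xo \<omega> i)) (muhat i (past \<omega> i) (Xo \<omega> i))"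
definition "xih i \<omega> = Zh i \<omega> + T2h i \<omega> - tt"

lemma past_upd_gt: "i < j \<Longrightarrow> past (h(j := ob)) i = past h i"
  unfolding past_def by (auto simp: restrict_def fun_eq_iff)

lemma past_upd_eq: "h \<in> space (H i) \<Longrightarrow> past (h(i := ob)) i = h"
  unfolding past_def by (auto simp: restrict_def fun_eq_iff histM_def space_PiM PiE_def extensional_def)

lemma past_past: "i < k \<Longrightarrow> past (past \<omega> k) i = past \<omega> i"
  unfolding past_def by (auto simp: restrict_def fun_eq_iff)

lemma past_at: "i < k \<Longrightarrow> past \<omega> k i = \<omega> i"
  unfolding past_def by auto

lemma xih_upd_gt: "i < j \<Longrightarrow> xih i (h(j := ob)) = xih i h"
  unfolding xih_def Zh_def T2h_def Xo_def Ao_def Yo_def using past_upd_gt[of i j h ob] by simp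

lemma xih_upd_eq: "h \<in> space (H i) \<Longrightarrow> xih i (h(i := ob)) = sxi i h ob"
  unfolding xih_def Zh_def T2h_def Xo_def Ao_def Yo_def sxi_def T2_def using past_upd_eq[of h i ob]
  by (simp add: split_beta')

lemma Zh_upd_eq: "h \<in> space (H i) \<Longrightarrow> Zh i (h(i := ob)) = sZ i h ob"
  unfolding Zh_def Xo_def Ao_def Yo_def sZ_def using past_upd_eq[of h i ob]
  by (simp add: split_beta')

lemma xih_past: "i < k \<Longrightarrow> xih i (past \<omega> k) = xih i \<omega>"
  unfolding xih_def Zh_def T2h_def Xo_def Ao_def Yo_def by (simp add: past_past past_at)

lemma Zh_past: "i < k \<Longrightarrow> Zh i (past \<omega> k) = Zh i \<omega>"
  unfolding Zh_def Xo_def Ao_def Yo_def by (simp add: past_past past_at)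

lemma comp_m: assumes "i < k" shows "(\<lambda>\<omega>. \<omega> i) \<in> H k \<rightarrow>\<^sub>M OB"
  unfolding histM_def using assms by (intro measurable_component_singleton) auto

lemma Xo_m: assumes "i < k" shows "(\<lambda>\<omega>. Xo \<omega> i) \<in> H k \<rightarrow>\<^sub>M Xi"
proof -
  have "(\<lambda>ob. fst ob) \<in> OB \<rightarrow>\<^sub>M Xi" unfolding obsM_def by measurable
  from measurable_compose[OF comp_m[OF assms] this] show ?thesis unfolding Xo_def by simp
qed

lemma Ao_m: assumes "i < k" shows "(\<lambda>\<omega>. Ao \<omega> i) \<in> H k \<rightarrow>\<^sub>M MA"
proof -
  have "(\<lambda>ob. fst (snd ob)) \<in> OB \<rightarrow>\<^sub>M MA" unfolding obsM_def by measurable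
  from measurable_compose[OF comp_m[OF assms] this] show ?thesis unfolding Ao_def by simp
qed

lemma Yo_m: assumes "i < k" shows "(\<lambda>\<omega>. Yo \<omega> i) \<in> borel_measurable (H k)"
proof -
  have "(\<lambda>ob. snd (snd ob)) \<in> borel_measurable OB" unfolding obsM_def by measurable
  from measurable_compose[OF comp_m[OF assms] this] show ?thesis unfolding Yo_def by simp
qed

lemma past_m: assumes "i \<le> k" shows "(\<lambda>\<omega>. past \<omega> i) \<in> H k \<rightarrow>\<^sub>M H i"
  unfolding past_def histM_def using assms by (intro measurable_restrict_subset) auto

lemma Zh_m: assumes "i < k" "i < n" shows "Zh i \<in> borel_measurable (H k)"
proof -
  note [measurable] = Xo_m[OF assms(1)] Ao_m[OF assms(1)] Yo_m[OF assms(1)] past_m[of i k]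
  note [measurable (raw)] = pol_comp[OF assms(2)] muhat_comp[OF assms(2)]
  have ik: "i \<le> k" using assms by simp
  show ?thesis unfolding Zh_def[abs_def] using ik by measurable
qed

lemma xih_m: assumes "i < k" "i < n" shows "xih i \<in> borel_measurable (H k)"
proof -
  note [measurable] = Xo_m[OF assms(1)] Ao_m[OF assms(1)] Yo_m[OF assms(1)] past_m[of i k] Zh_m[OF assms]
  note [measurable (raw)] = pol_comp[OF assms(2)] muhat_comp[OF assms(2)] T2_comp[OF assms(2)]
  have ik: "i \<le> k" using assms by simp
  have "(\<lambda>\<omega>. T2 i (past \<omega> i) (Xo \<omega> i)) \<in> borel_measurable (H k)" using ik by measurable
  then have "T2h i \<in> borel_measurable (H k)" unfolding T2h_def[abs_def] T2_def by simp
  then show ?thesis unfolding xih_def[abs_def] using Zh_m[OF assms] by measurable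
qed


lemma abs_prod_le: "\<bar>a * b\<bar> \<le> a\<^sup>2 + (b::real)\<^sup>2"
proof -
  have "0 \<le> (\<bar>a\<bar> - \<bar>b\<bar>)\<^sup>2" by simp
  moreover have "(\<bar>a\<bar> - \<bar>b\<bar>)\<^sup>2 = a\<^sup>2 + b\<^sup>2 - 2 * \<bar>a * b\<bar>"
    by (simp add: power2_diff abs_mult)
  moreover have "0 \<le> \<bar>a * b\<bar>" by simp
  ultimately show ?thesis by linarith
qed

lemma Dn_meas: assumes "f \<in> borel_measurable (H n)" shows "f \<in> borel_measurable (D n)"
  using assms unfolding measurable_cong_sets[OF D_sets[OF order.refl] refl] .

lemma Dn_prob: "prob_space (D n)" using D_prob by simp

lemma sq_int: fixes f :: "_ \<Rightarrow> real"
  shows "f \<in> borel_measurable (H n) \<Longrightarrow> integrable (D n) (\<lambda>\<omega>. (f \<omega>)\<^sup>2) \<Longrightarrow> integrable (D n) f"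
proof -
  interpret P: prob_space "D n" by (rule Dn_prob)
  show "f \<in> borel_measurable (H n) \<Longrightarrow> integrable (D n) (\<lambda>\<omega>. (f \<omega>)\<^sup>2) \<Longrightarrow> integrable (D n) f"
    using P.square_integrable_imp_integrable Dn_meas by blast
qed

lemma PA:
  assumes ij: "i < j" "j < n" and sqi: "integrable (D n) (\<lambda>\<omega>. (xih i \<omega>)\<^sup>2)"
    and sqj: "integrable (D n) (\<lambda>\<omega>. (xih j \<omega>)\<^sup>2)"
  shows "integrable (D n) (\<lambda>\<omega>. xih i \<omega> * xih j \<omega>)" and "(\<integral>\<omega>. xih i \<omega> * xih j \<omega> \<partial>D n) = 0"
proof -
  have i: "i < n" using ij by simp
  have m1[measurable]: "xih i \<in> borel_measurable (H (Suc j))" by (rule xih_m) (use ij in auto)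
  have m2[measurable]: "xih j \<in> borel_measurable (H (Suc j))" by (rule xih_m) (use ij in auto)
  have m3[measurable]: "xih i \<in> borel_measurable (H n)" by (rule xih_m) (use ij in auto)
  have m4[measurable]: "xih j \<in> borel_measurable (H n)" by (rule xih_m) (use ij in auto)
  have mp: "(\<lambda>\<omega>. xih i \<omega> * xih j \<omega>) \<in> borel_measurable (D n)"
    using ij by (intro Dn_meas) measurable
  show ip: "integrable (D n) (\<lambda>\<omega>. xih i \<omega> * xih j \<omega>)"
  proof (rule Bochner_Integration.integrable_bound[OF _ mp])
    show "integrable (D n) (\<lambda>\<omega>. (xih i \<omega>)\<^sup>2 + (xih j \<omega>)\<^sup>2)" using sqi sqj by simp
    show "AE \<omega> in D n. norm (xih i \<omega> * xih j \<omega>) \<le> norm ((xih i \<omega>)\<^sup>2 + (xih j \<omega>)\<^sup>2)"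
    proof (intro AE_I2)
      fix \<omega>
      have "\<bar>xih i \<omega> * xih j \<omega>\<bar> \<le> (xih i \<omega>)\<^sup>2 + (xih j \<omega>)\<^sup>2"
        by (rule abs_prod_le)
      then show "norm (xih i \<omega> * xih j \<omega>) \<le> norm ((xih i \<omega>)\<^sup>2 + (xih j \<omega>)\<^sup>2)" by simp
    qed
  qed
  have Fm: "(\<lambda>\<omega>. xih i \<omega> * xih j \<omega>) \<in> borel_measurable (H (Suc j))" using ij by measurable
  have Fp: "(\<lambda>\<omega>. xih i (past \<omega> (Suc j)) * xih j (past \<omega> (Suc j))) = (\<lambda>\<omega>. xih i \<omega> * xih j \<omega>)"
    using ij by (simp add: xih_past)
  note D1 = descent[OF ij(2) Fm, unfolded Fp, OF ip]
  have xjm: "xih j \<in> borel_measurable (H (Suc j))" by measurable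
  have xjp: "(\<lambda>\<omega>. xih j (past \<omega> (Suc j))) = xih j" by (simp add: xih_past fun_eq_iff)
  have xji: "integrable (D n) (xih j)" by (rule sq_int[OF _ sqj]) (use ij in measurable)
  note D2 = descent[OF ij(2) xjm, unfolded xjp, OF xji]
  have sp: "space (D j) = space (H j)" using D_spc ij by simp
  have AE0: "AE h in D j. (\<integral>ob. xih i (h(j := ob)) * xih j (h(j := ob)) \<partial>SL j h) = 0"
  proof -
    have "AE h in D j. integrable (SL j h) (\<lambda>ob. xih j (h(j := ob)))" using D2 by simp
    then show ?thesis
    proof (rule AE_mp, intro AE_I2 impI)
      fix h assume h: "h \<in> space (D j)" and it: "integrable (SL j h) (\<lambda>ob. xih j (h(j := ob)))"
      have hH: "h \<in> space (H j)" using h sp by simp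
      have it2: "integrable (SL j h) (sxi j h)" using it xih_upd_eq[OF hH] by simp
      have "(\<integral>ob. xih i (h(j := ob)) * xih j (h(j := ob)) \<partial>SL j h) = (\<integral>ob. xih i h * sxi j h ob \<partial>SL j h)"
        using xih_upd_gt[OF ij(1)] xih_upd_eq[OF hH] by simp
      also have "\<dots> = xih i h * integral\<^sup>L (SL j h) (sxi j h)" by simp
      also have "\<dots> = 0" using stepA[OF ij(2) hH it2] by simp
      finally show "(\<integral>ob. xih i (h(j := ob)) * xih j (h(j := ob)) \<partial>SL j h) = 0" .
    qed
  qed
  have "(\<integral>\<omega>. xih i \<omega> * xih j \<omega> \<partial>D n) = (\<integral>h. (\<integral>ob. xih i (h(j := ob)) * xih j (h(j := ob)) \<partial>SL j h) \<partial>D j)"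
    using D1 by simp
  also have "\<dots> = (\<integral>h. 0 \<partial>D j)"
    using D1 AE0 by (intro integral_cong_AE) (auto intro: borel_measurable_integrable)
  finally show "(\<integral>\<omega>. xih i \<omega> * xih j \<omega> \<partial>D n) = 0" by simp
qed


lemma PB:
  assumes i: "i < n" and sqi: "integrable (D n) (\<lambda>\<omega>. (xih i \<omega>)\<^sup>2)"
    and zq: "integrable (D n) (\<lambda>\<omega>. (Zh i \<omega>)\<^sup>2)"
  shows "(\<integral>\<omega>. (xih i \<omega>)\<^sup>2 \<partial>D n) \<le> (\<integral>\<omega>. (Zh i \<omega>)\<^sup>2 \<partial>D n) + (\<integral>x. (mm x - tt)\<^sup>2 \<partial>Xi)"
proof -
  have m1[measurable]: "xih i \<in> borel_measurable (H (Suc i))" by (rule xih_m) (use i in auto)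
  have m2[measurable]: "Zh i \<in> borel_measurable (H (Suc i))" by (rule Zh_m) (use i in auto)
  have F1: "(\<lambda>\<omega>. (xih i \<omega>)\<^sup>2) \<in> borel_measurable (H (Suc i))" by measurable
  have F2: "(\<lambda>\<omega>. (Zh i \<omega>)\<^sup>2) \<in> borel_measurable (H (Suc i))" by measurable
  have p1: "(\<lambda>\<omega>. (xih i (past \<omega> (Suc i)))\<^sup>2) = (\<lambda>\<omega>. (xih i \<omega>)\<^sup>2)" by (simp add: xih_past)
  have p2: "(\<lambda>\<omega>. (Zh i (past \<omega> (Suc i)))\<^sup>2) = (\<lambda>\<omega>. (Zh i \<omega>)\<^sup>2)" by (simp add: Zh_past)
  note D1 = descent[OF i F1, unfolded p1, OF sqi]
  note D2 = descent[OF i F2, unfolded p2, OF zq]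
  have sp: "space (D i) = space (H i)" using D_spc i by simp
  have "(\<integral>\<omega>. (xih i \<omega>)\<^sup>2 \<partial>D n) = (\<integral>h. (\<integral>ob. (xih i (h(i := ob)))\<^sup>2 \<partial>SL i h) \<partial>D i)"
    using D1 by simp
  also have "\<dots> \<le> (\<integral>h. (\<integral>ob. (Zh i (h(i := ob)))\<^sup>2 \<partial>SL i h) + (\<integral>x. (mm x - tt)\<^sup>2 \<partial>Xi) \<partial>D i)"
  proof (rule integral_mono_AE)
    show "integrable (D i) (\<lambda>h. \<integral>ob. (xih i (h(i := ob)))\<^sup>2 \<partial>SL i h)" using D1 by simp
    interpret Di: prob_space "D i" using D_prob i by simp
    show "integrable (D i) (\<lambda>h. (\<integral>ob. (Zh i (h(i := ob)))\<^sup>2 \<partial>SL i h) + (\<integral>x. (mm x - tt)\<^sup>2 \<partial>Xi))"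
      using D2 by simp
    have A1: "AE h in D i. integrable (SL i h) (\<lambda>ob. (xih i (h(i := ob)))\<^sup>2)" using D1 by simp
    have A2: "AE h in D i. integrable (SL i h) (\<lambda>ob. (Zh i (h(i := ob)))\<^sup>2)" using D2 by simp
    show "AE h in D i. (\<integral>ob. (xih i (h(i := ob)))\<^sup>2 \<partial>SL i h)
       \<le> (\<integral>ob. (Zh i (h(i := ob)))\<^sup>2 \<partial>SL i h) + (\<integral>x. (mm x - tt)\<^sup>2 \<partial>Xi)"
    proof -
      have hin: "(\<integral>ob. (xih i (h(i := ob)))\<^sup>2 \<partial>SL i h)
       \<le> (\<integral>ob. (Zh i (h(i := ob)))\<^sup>2 \<partial>SL i h) + (\<integral>x. (mm x - tt)\<^sup>2 \<partial>Xi)"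
        if h: "h \<in> space (D i)" and a1: "integrable (SL i h) (\<lambda>ob. (xih i (h(i := ob)))\<^sup>2)"
          and a2: "integrable (SL i h) (\<lambda>ob. (Zh i (h(i := ob)))\<^sup>2)" for h
      proof -
        have hH: "h \<in> space (H i)" using h sp by simp
        show ?thesis using a1 a2 stepB[OF i hH] by (simp add: xih_upd_eq[OF hH] Zh_upd_eq[OF hH])
      qed
      from A1 A2 have "AE h in D i. integrable (SL i h) (\<lambda>ob. (xih i (h(i := ob)))\<^sup>2)
         \<and> integrable (SL i h) (\<lambda>ob. (Zh i (h(i := ob)))\<^sup>2)" by eventually_elim simp
      then show ?thesis by (rule AE_mp) (auto intro!: AE_I2 hin)
    qed
  qed
  also have "\<dots> = (\<integral>\<omega>. (Zh i \<omega>)\<^sup>2 \<partial>D n) + (\<integral>x. (mm x - tt)\<^sup>2 \<partial>Xi)"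
  proof -
    interpret Di: prob_space "D i" using D_prob i by simp
    show ?thesis using D2 by (simp add: Di.prob_space)
  qed
  finally show ?thesis .
qed


lemma PC:
  assumes i: "i < n" and mum[measurable]: "(\<lambda>(x, a). mu x a) \<in> borel_measurable (Xi \<Otimes>\<^sub>M MA)"
    and iL: "integrable (D n) (loss pol g i mu)"
    and iS1: "integrable (D n) (\<lambda>\<omega>. (g (Xo \<omega> i) (Ao \<omega> i))\<^sup>2
       * (sigma_fn Gam (Xo \<omega> i) (Ao \<omega> i))\<^sup>2 / (pol i (Xo \<omega> i) (past \<omega> i) (Ao \<omega> i))\<^sup>2)"
    and iS2: "integrable (D n) (\<lambda>\<omega>. (g (Xo \<omega> i) (Ao \<omega> i))\<^sup>2
       * (mu (Xo \<omega> i) (Ao \<omega> i) - mu_star Gam (Xo \<omega> i) (Ao \<omega> i))\<^sup>2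
       / (pol i (Xo \<omega> i) (past \<omega> i) (Ao \<omega> i))\<^sup>2)"
  shows "integral\<^sup>L (D n) (loss pol g i mu) = (\<integral>\<omega>. (g (Xo \<omega> i) (Ao \<omega> i))\<^sup>2
       * (sigma_fn Gam (Xo \<omega> i) (Ao \<omega> i))\<^sup>2 / (pol i (Xo \<omega> i) (past \<omega> i) (Ao \<omega> i))\<^sup>2 \<partial>D n)
     + (\<integral>\<omega>. (g (Xo \<omega> i) (Ao \<omega> i))\<^sup>2
       * (mu (Xo \<omega> i) (Ao \<omega> i) - mu_star Gam (Xo \<omega> i) (Ao \<omega> i))\<^sup>2
       / (pol i (Xo \<omega> i) (past \<omega> i) (Ao \<omega> i))\<^sup>2 \<partial>D n)"
proof -
  define S where "S \<omega> = (g (Xo \<omega> i) (Ao \<omega> i))\<^sup>2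
       * (sigma_fn Gam (Xo \<omega> i) (Ao \<omega> i))\<^sup>2 / (pol i (Xo \<omega> i) (past \<omega> i) (Ao \<omega> i))\<^sup>2
     + (g (Xo \<omega> i) (Ao \<omega> i))\<^sup>2
       * (mu (Xo \<omega> i) (Ao \<omega> i) - mu_star Gam (Xo \<omega> i) (Ao \<omega> i))\<^sup>2
       / (pol i (Xo \<omega> i) (past \<omega> i) (Ao \<omega> i))\<^sup>2" for \<omega>
  have iS: "integrable (D n) S" unfolding S_def using iS1 iS2 by simp
  have ii: "i < Suc i" by simp
  note [measurable] = Xo_m[OF ii] Ao_m[OF ii] Yo_m[OF ii] past_m[of i "Suc i"]
  note [measurable (raw)] = pol_comp[OF i]
  have mc[measurable (raw)]: "(\<lambda>w. mu (f w) (k w)) \<in> borel_measurable M" if "f \<in> M \<rightarrow>\<^sub>M Xi" "k \<in> M \<rightarrow>\<^sub>M MA" for f k and M :: "'z measure"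
    using measurable_compose[OF measurable_Pair[OF that] mum] by simp
  have Lm: "loss pol g i mu \<in> borel_measurable (H (Suc i))" unfolding loss_def[abs_def] by measurable
  have Sm: "S \<in> borel_measurable (H (Suc i))" unfolding S_def[abs_def] by measurable
  have pL: "(\<lambda>\<omega>. loss pol g i mu (past \<omega> (Suc i))) = loss pol g i mu"
    by (simp add: fun_eq_iff loss_def Xo_def Ao_def Yo_def past_past past_at)
  have pS: "(\<lambda>\<omega>. S (past \<omega> (Suc i))) = S"
    by (simp add: fun_eq_iff S_def Xo_def Ao_def Yo_def past_past past_at)
  note D1 = descent[OF i Lm, unfolded pL, OF iL]
  note D2 = descent[OF i Sm, unfolded pS, OF iS]
  have sp: "space (D i) = space (H i)" using D_spc i by simp
  have hin: "(\<integral>ob. loss pol g i mu (h(i := ob)) \<partial>SL i h) = (\<integral>ob. S (h(i := ob)) \<partial>SL i h)"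
    if h: "h \<in> space (D i)" and a1: "integrable (SL i h) (\<lambda>ob. loss pol g i mu (h(i := ob)))"
      and a2: "integrable (SL i h) (\<lambda>ob. S (h(i := ob)))" for h
  proof -
    have hH: "h \<in> space (H i)" using h sp by simp
    have e1: "(\<lambda>ob. loss pol g i mu (h(i := ob))) = sL mu i h"
      by (simp add: fun_eq_iff loss_def sL_def Xo_def Ao_def Yo_def past_upd_eq[OF hH] split_beta')
    have e2: "(\<lambda>ob. S (h(i := ob))) = sS mu i h"
      by (simp add: fun_eq_iff S_def sS_def Xo_def Ao_def Yo_def past_upd_eq[OF hH] split_beta')
    show ?thesis using a1 a2 stepC[OF i hH mum] unfolding e1 e2 by simp
  qed
  have A1: "AE h in D i. integrable (SL i h) (\<lambda>ob. loss pol g i mu (h(i := ob)))" using D1 by simp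
  have A2: "AE h in D i. integrable (SL i h) (\<lambda>ob. S (h(i := ob)))" using D2 by simp
  from A1 A2 have "AE h in D i. integrable (SL i h) (\<lambda>ob. loss pol g i mu (h(i := ob)))
       \<and> integrable (SL i h) (\<lambda>ob. S (h(i := ob)))" by eventually_elim simp
  then have AEe: "AE h in D i. (\<integral>ob. loss pol g i mu (h(i := ob)) \<partial>SL i h) = (\<integral>ob. S (h(i := ob)) \<partial>SL i h)"
    by (rule AE_mp) (auto intro!: AE_I2 hin)
  have "integral\<^sup>L (D n) (loss pol g i mu) = integral\<^sup>L (D n) S"
    using D1 D2 AEe by (simp add: integral_cong_AE borel_measurable_integrable)
  then show ?thesis unfolding S_def using iS1 iS2 by simp
qed


lemma sq3_le: "(a + b - c)\<^sup>2 \<le> 3 * (a\<^sup>2 + b\<^sup>2 + (c::real)\<^sup>2)"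
proof -
  have "3 * (a\<^sup>2 + b\<^sup>2 + c\<^sup>2) - (a + b - c)\<^sup>2 = (a - b)\<^sup>2 + (a + c)\<^sup>2 + (b + c)\<^sup>2"
    by (simp add: power2_eq_square algebra_simps)
  moreover have "0 \<le> (a - b)\<^sup>2 + (a + c)\<^sup>2 + (b + c)\<^sup>2" by simp
  ultimately show ?thesis by linarith
qed

lemma loss_nonneg: "0 \<le> loss pol g i mu \<omega>"
  unfolding loss_def by simp

lemma final:
  assumes F_meas: "\<And>mu. mu \<in> F \<Longrightarrow> (\<lambda>(x, a). mu x a) \<in> borel_measurable (Xi \<Otimes>\<^sub>M MA)"
    and F_ne: "F \<noteq> {}"
    and int_sigma: "\<And>i. i < n \<Longrightarrow> integrable (D n) (\<lambda>\<omega>. (g (Xo \<omega> i) (Ao \<omega> i))\<^sup>2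
       * (sigma_fn Gam (Xo \<omega> i) (Ao \<omega> i))\<^sup>2 / (pol i (Xo \<omega> i) (past \<omega> i) (Ao \<omega> i))\<^sup>2)"
    and int_F_norm: "\<And>i mu. i < n \<Longrightarrow> mu \<in> F \<Longrightarrow> integrable (D n) (\<lambda>\<omega>. (g (Xo \<omega> i) (Ao \<omega> i))\<^sup>2
       * (mu (Xo \<omega> i) (Ao \<omega> i) - mu_star Gam (Xo \<omega> i) (Ao \<omega> i))\<^sup>2
       / (pol i (Xo \<omega> i) (past \<omega> i) (Ao \<omega> i))\<^sup>2)"
    and int_loss_F: "\<And>i mu. i < n \<Longrightarrow> mu \<in> F \<Longrightarrow> integrable (D n) (loss pol g i mu)"
    and int_loss_hat: "\<And>i. i < n \<Longrightarrow> integrable (D n) (\<lambda>\<omega>. loss pol g i (muhat i (past \<omega> i)) \<omega>)"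
    and int_term1: "\<And>i. i < n \<Longrightarrow> integrable (D n) (\<lambda>\<omega>.
       (g (Xo \<omega> i) (Ao \<omega> i) / pol i (Xo \<omega> i) (past \<omega> i) (Ao \<omega> i)
          * (Yo \<omega> i - muhat i (past \<omega> i) (Xo \<omega> i) (Ao \<omega> i)))\<^sup>2)"
    and int_term2: "\<And>i. i < n \<Longrightarrow> integrable (D n) (\<lambda>\<omega>.
       (innerA MA (g (Xo \<omega> i)) (muhat i (past \<omega> i) (Xo \<omega> i)))\<^sup>2)"
    and int_regret: "integrable (D n) (regret pol g n F muhat)"
  shows "integral\<^sup>L (D n) (\<lambda>\<omega>. (aipw MA pol g n muhat \<omega> - tau Xi MA Gam g)\<^sup>2)
    \<le> (1 / real n) * (eff_var Xi MA Gam pol g n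
         + (1 / real n) * integral\<^sup>L (D n) (regret pol g n F muhat)
         + (INF mu\<in>F. wnorm2 Xi MA Gam pol g n (\<lambda>x a. mu x a - mu_star Gam x a)))"
proof -
  let ?E = "integral\<^sup>L (D n)"
  define Var where "Var = (\<integral>x. (mm x - tt)\<^sup>2 \<partial>Xi)"
  define S1 where "S1 i \<omega> = (g (Xo \<omega> i) (Ao \<omega> i))\<^sup>2
       * (sigma_fn Gam (Xo \<omega> i) (Ao \<omega> i))\<^sup>2 / (pol i (Xo \<omega> i) (past \<omega> i) (Ao \<omega> i))\<^sup>2" for i \<omega>
  define S2 where "S2 mu i \<omega> = (g (Xo \<omega> i) (Ao \<omega> i))\<^sup>2
       * (mu (Xo \<omega> i) (Ao \<omega> i) - mu_star Gam (Xo \<omega> i) (Ao \<omega> i))\<^sup>2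
       / (pol i (Xo \<omega> i) (past \<omega> i) (Ao \<omega> i))\<^sup>2" for mu i \<omega>
  define W1 where "W1 = wnorm2 Xi MA Gam pol g n (sigma_fn Gam)"
  define W2 where "W2 mu = wnorm2 Xi MA Gam pol g n (\<lambda>x a. mu x a - mu_star Gam x a)" for mu
  define R where "R = ?E (regret pol g n F muhat)"
  have nP: "0 < n" by (rule n_pos)
  have sqZ: "integrable (D n) (\<lambda>\<omega>. (Zh i \<omega>)\<^sup>2)" if "i < n" for i
    unfolding Zh_def by (rule int_term1[OF that])
  have sqT: "integrable (D n) (\<lambda>\<omega>. (T2h i \<omega>)\<^sup>2)" if "i < n" for i
    unfolding T2h_def by (rule int_term2[OF that])
  have sqX: "integrable (D n) (\<lambda>\<omega>. (xih i \<omega>)\<^sup>2)" if i: "i < n" for i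
  proof (rule Bochner_Integration.integrable_bound)
    interpret P: prob_space "D n" by (rule Dn_prob)
    show "integrable (D n) (\<lambda>\<omega>. 3 * ((Zh i \<omega>)\<^sup>2 + (T2h i \<omega>)\<^sup>2 + tt\<^sup>2))"
      using sqZ[OF i] sqT[OF i] by simp
    have "xih i \<in> borel_measurable (H n)" by (rule xih_m) (use i in auto)
    then show "(\<lambda>\<omega>. (xih i \<omega>)\<^sup>2) \<in> borel_measurable (D n)" by (intro Dn_meas) measurable
    show "AE \<omega> in D n. norm ((xih i \<omega>)\<^sup>2) \<le> norm (3 * ((Zh i \<omega>)\<^sup>2 + (T2h i \<omega>)\<^sup>2 + tt\<^sup>2))"
      using sq3_le by (auto simp: xih_def)
  qed
  have prodI: "integrable (D n) (\<lambda>\<omega>. xih i \<omega> * xih j \<omega>)" if "i < n" "j < n" for i j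
  proof (cases i j rule: linorder_cases)
    case less then show ?thesis using PA(1)[OF less that(2) sqX sqX] that by simp
  next
    case equal then show ?thesis using sqX[OF that(1)] by (simp add: power2_eq_square)
  next
    case greater then show ?thesis using PA(1)[OF greater that(1) sqX sqX] that by (simp add: mult.commute)
  qed
  have prodE: "?E (\<lambda>\<omega>. xih i \<omega> * xih j \<omega>) = (if j = i then ?E (\<lambda>\<omega>. (xih i \<omega>)\<^sup>2) else 0)"
    if "i < n" "j < n" for i j
  proof (cases i j rule: linorder_cases)
    case less then show ?thesis using PA(2)[OF less that(2) sqX sqX] that by simp
  next
    case equal then show ?thesis by (simp add: power2_eq_square)
  next
    case greater then show ?thesis using PA(2)[OF greater that(1) sqX sqX] that by (simp add: mult.commute)
  qed
  have aip: "aipw MA pol g n muhat \<omega> - tt = (1 / real n) * (\<Sum>i<n. xih i \<omega>)" for \<omega>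
  proof -
    have "(\<Sum>i<n. xih i \<omega>) = (\<Sum>i<n. Zh i \<omega> + T2h i \<omega>) - real n * tt"
      by (simp add: xih_def sum_subtractf)
    moreover have "aipw MA pol g n muhat \<omega> = (1 / real n) * (\<Sum>i<n. Zh i \<omega> + T2h i \<omega>)"
      by (simp add: aipw_def Zh_def T2h_def)
    ultimately show ?thesis using nP by (simp add: field_simps)
  qed
  have sqexp: "(aipw MA pol g n muhat \<omega> - tt)\<^sup>2 = (1 / real n)\<^sup>2 * (\<Sum>i<n. \<Sum>j<n. xih i \<omega> * xih j \<omega>)" for \<omega>
    unfolding aip by (simp add: power2_eq_square sum_product power_mult_distrib)
  have step1: "?E (\<lambda>\<omega>. (aipw MA pol g n muhat \<omega> - tt)\<^sup>2) = (1 / real n)\<^sup>2 * (\<Sum>i<n. ?E (\<lambda>\<omega>. (xih i \<omega>)\<^sup>2))"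
  proof -
    have "?E (\<lambda>\<omega>. (aipw MA pol g n muhat \<omega> - tt)\<^sup>2) = (1 / real n)\<^sup>2 * ?E (\<lambda>\<omega>. \<Sum>i<n. \<Sum>j<n. xih i \<omega> * xih j \<omega>)"
      unfolding sqexp by simp
    also have "?E (\<lambda>\<omega>. \<Sum>i<n. \<Sum>j<n. xih i \<omega> * xih j \<omega>) = (\<Sum>i<n. \<Sum>j<n. ?E (\<lambda>\<omega>. xih i \<omega> * xih j \<omega>))"
    proof -
      have "?E (\<lambda>\<omega>. \<Sum>i<n. \<Sum>j<n. xih i \<omega> * xih j \<omega>) = (\<Sum>i<n. ?E (\<lambda>\<omega>. \<Sum>j<n. xih i \<omega> * xih j \<omega>))"
        by (rule Bochner_Integration.integral_sum) (use prodI in \<open>auto intro!: Bochner_Integration.integrable_sum\<close>)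
      also have "\<dots> = (\<Sum>i<n. \<Sum>j<n. ?E (\<lambda>\<omega>. xih i \<omega> * xih j \<omega>))"
        by (rule sum.cong[OF refl], rule Bochner_Integration.integral_sum) (use prodI in auto)
      finally show ?thesis .
    qed
    also have "\<dots> = (\<Sum>i<n. ?E (\<lambda>\<omega>. (xih i \<omega>)\<^sup>2))"
      by (rule sum.cong[OF refl]) (simp add: prodE)
    finally show ?thesis .
  qed
  have lossZ: "loss pol g i (muhat i (past \<omega> i)) \<omega> = (Zh i \<omega>)\<^sup>2" for i \<omega>
    by (simp add: loss_def Zh_def power_mult_distrib power_divide)
  define Inf where "Inf \<omega> = (INF mu\<in>F. \<Sum>i<n. loss pol g i mu \<omega>)" for \<omega>
  have regI: "regret pol g n F muhat \<omega> = (\<Sum>i<n. (Zh i \<omega>)\<^sup>2) - Inf \<omega>" for \<omega>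
    by (simp add: regret_def Inf_def lossZ)
  have iInf: "integrable (D n) Inf"
  proof -
    have "integrable (D n) (\<lambda>\<omega>. (\<Sum>i<n. (Zh i \<omega>)\<^sup>2) - regret pol g n F muhat \<omega>)"
      using sqZ int_regret by (intro Bochner_Integration.integrable_diff Bochner_Integration.integrable_sum) auto
    then show ?thesis by (simp add: regI)
  qed
  have sumZ: "(\<Sum>i<n. ?E (\<lambda>\<omega>. (Zh i \<omega>)\<^sup>2)) = R + ?E Inf"
  proof -
    have "(\<Sum>i<n. ?E (\<lambda>\<omega>. (Zh i \<omega>)\<^sup>2)) = ?E (\<lambda>\<omega>. \<Sum>i<n. (Zh i \<omega>)\<^sup>2)"
      using sqZ by (simp add: Bochner_Integration.integral_sum)
    also have "\<dots> = ?E (\<lambda>\<omega>. regret pol g n F muhat \<omega> + Inf \<omega>)" by (simp add: regI)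
    also have "\<dots> = R + ?E Inf" using int_regret iInf by (simp add: R_def)
    finally show ?thesis .
  qed
  have bound: "?E (\<lambda>\<omega>. (aipw MA pol g n muhat \<omega> - tt)\<^sup>2)
      \<le> (1 / real n) * (Var + W1 + (1 / real n) * R + W2 mu)" if mu: "mu \<in> F" for mu
  proof -
    have InfLe: "Inf \<omega> \<le> (\<Sum>i<n. loss pol g i mu \<omega>)" for \<omega>
      unfolding Inf_def
      by (rule cINF_lower[OF _ mu]) (auto intro!: bdd_belowI[where m=0] sum_nonneg loss_nonneg)
    have "?E Inf \<le> ?E (\<lambda>\<omega>. \<Sum>i<n. loss pol g i mu \<omega>)"
      using iInf int_loss_F[OF _ mu] InfLe by (intro integral_mono) auto
    also have "\<dots> = (\<Sum>i<n. ?E (loss pol g i mu))"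
      using int_loss_F[OF _ mu] by (simp add: Bochner_Integration.integral_sum)
    also have "\<dots> = (\<Sum>i<n. ?E (S1 i) + ?E (S2 mu i))"
      using PC[OF _ F_meas[OF mu] int_loss_F[OF _ mu] int_sigma int_F_norm[OF _ mu]]
      by (intro sum.cong[OF refl]) (simp add: S1_def[abs_def] S2_def[abs_def])
    also have "\<dots> = real n * W1 + real n * W2 mu"
      using nP by (simp add: W1_def W2_def wnorm2_def S1_def[abs_def] S2_def[abs_def] sum.distrib)
    finally have EI: "?E Inf \<le> real n * W1 + real n * W2 mu" .
    have "?E (\<lambda>\<omega>. (aipw MA pol g n muhat \<omega> - tt)\<^sup>2) = (1 / real n)\<^sup>2 * (\<Sum>i<n. ?E (\<lambda>\<omega>. (xih i \<omega>)\<^sup>2))"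
      by (rule step1)
    also have "\<dots> \<le> (1 / real n)\<^sup>2 * (\<Sum>i<n. ?E (\<lambda>\<omega>. (Zh i \<omega>)\<^sup>2) + Var)"
      by (intro mult_left_mono sum_mono) (auto simp: Var_def intro!: PB sqX sqZ)
    also have "\<dots> = (1 / real n)\<^sup>2 * (R + ?E Inf + real n * Var)"
      by (simp add: sum.distrib sumZ)
    also have "\<dots> \<le> (1 / real n)\<^sup>2 * (R + real n * W1 + real n * W2 mu + real n * Var)"
      using EI by (intro mult_left_mono) auto
    also have "\<dots> = (1 / real n) * (Var + W1 + (1 / real n) * R + W2 mu)"
      using nP by (simp add: power2_eq_square field_simps)
    finally show ?thesis .
  qed
  have ev: "eff_var Xi MA Gam pol g n = Var + W1"
    by (simp add: eff_var_def Var_def W1_def mm_def)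
  have "real n * ?E (\<lambda>\<omega>. (aipw MA pol g n muhat \<omega> - tt)\<^sup>2) - (Var + W1 + (1 / real n) * R)
      \<le> (INF mu\<in>F. W2 mu)"
  proof (rule cINF_greatest[OF F_ne])
    fix mu assume mu: "mu \<in> F"
    show "real n * ?E (\<lambda>\<omega>. (aipw MA pol g n muhat \<omega> - tt)\<^sup>2) - (Var + W1 + (1 / real n) * R) \<le> W2 mu"
      using bound[OF mu] nP by (simp add: field_simps)
  qed
  then show ?thesis using nP unfolding ev R_def[symmetric] W2_def[symmetric]
    by (simp add: field_simps)
qed

end

theorem theorem2:
  fixes Xi :: "'x measure" and MA :: "'a measure"
    and Gam :: "'x \<Rightarrow> 'a \<Rightarrow> real measure"
    and pol :: "nat \<Rightarrow> 'x \<Rightarrow> ('x, 'a) hist \<Rightarrow> 'a \<Rightarrow> real"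
    and g :: "'x \<Rightarrow> 'a \<Rightarrow> real"
    and F :: "('x \<Rightarrow> 'a \<Rightarrow> real) set"
    and muhat :: "nat \<Rightarrow> ('x, 'a) hist \<Rightarrow> 'x \<Rightarrow> 'a \<Rightarrow> real"
    and n :: nat
  defines "P \<equiv> data_law Xi MA Gam pol n"
  assumes n_pos: "0 < n"
    and Xi_prob: "prob_space Xi"
    and MA_sf: "sigma_finite_measure MA"
    and Gam_kernel: "(\<lambda>(x, a). Gam x a) \<in> Xi \<Otimes>\<^sub>M MA \<rightarrow>\<^sub>M prob_algebra (borel :: real measure)"
    and Gam_var: "\<And>x a. x \<in> space Xi \<Longrightarrow> a \<in> space MA \<Longrightarrow> integrable (Gam x a) (\<lambda>y. y\<^sup>2)"
    and pi_meas: "\<And>i. i < n \<Longrightarrow>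
       (\<lambda>(x, h, a). pol i x h a) \<in> Xi \<Otimes>\<^sub>M (histM Xi MA i \<Otimes>\<^sub>M MA) \<rightarrow>\<^sub>M borel"
    and pi_nonneg: "\<And>i x h a. i < n \<Longrightarrow> x \<in> space Xi \<Longrightarrow> h \<in> space (histM Xi MA i)
       \<Longrightarrow> a \<in> space MA \<Longrightarrow> 0 \<le> pol i x h a"
    and pi_dens: "\<And>i x h. i < n \<Longrightarrow> x \<in> space Xi \<Longrightarrow> h \<in> space (histM Xi MA i)
       \<Longrightarrow> (\<integral>\<^sup>+ a. ennreal (pol i x h a) \<partial>MA) = 1"
    and overlap: "\<And>i x h a. i < n \<Longrightarrow> x \<in> space Xi \<Longrightarrow> h \<in> space (histM Xi MA i)
       \<Longrightarrow> a \<in> space MA \<Longrightarrow> g x a \<noteq> 0 \<Longrightarrow> 0 < pol i x h a"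
    and g_meas: "(\<lambda>(x, a). g x a) \<in> borel_measurable (Xi \<Otimes>\<^sub>M MA)"
    and F_meas: "\<And>mu. mu \<in> F \<Longrightarrow> (\<lambda>(x, a). mu x a) \<in> borel_measurable (Xi \<Otimes>\<^sub>M MA)"
    and F_ne: "F \<noteq> {}"
    and muhat_meas: "\<And>i. i < n \<Longrightarrow>
       (\<lambda>(h, x, a). muhat i h x a) \<in> borel_measurable (histM Xi MA i \<Otimes>\<^sub>M (Xi \<Otimes>\<^sub>M MA))"
    \<comment> \<open>finiteness of all expectations / integrals that appear\<close>
    and int_gmu: "\<And>x. x \<in> space Xi \<Longrightarrow> integrable MA (\<lambda>a. g x a * mu_star Gam x a)"
    and int_gmuhat: "\<And>i h x. i < n \<Longrightarrow> h \<in> space (histM Xi MA i) \<Longrightarrow> x \<in> space Xi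
       \<Longrightarrow> integrable MA (\<lambda>a. g x a * muhat i h x a)"
    and int_target: "integrable Xi (\<lambda>x. (innerA MA (g x) (mu_star Gam x))\<^sup>2)"
    and int_sigma: "\<And>i. i < n \<Longrightarrow> integrable P (\<lambda>\<omega>. (g (Xo \<omega> i) (Ao \<omega> i))\<^sup>2
       * (sigma_fn Gam (Xo \<omega> i) (Ao \<omega> i))\<^sup>2 / (pol i (Xo \<omega> i) (past \<omega> i) (Ao \<omega> i))\<^sup>2)"
    and int_F_norm: "\<And>i mu. i < n \<Longrightarrow> mu \<in> F \<Longrightarrow> integrable P (\<lambda>\<omega>. (g (Xo \<omega> i) (Ao \<omega> i))\<^sup>2
       * (mu (Xo \<omega> i) (Ao \<omega> i) - mu_star Gam (Xo \<omega> i) (Ao \<omega> i))\<^sup>2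
       / (pol i (Xo \<omega> i) (past \<omega> i) (Ao \<omega> i))\<^sup>2)"
    and int_loss_F: "\<And>i mu. i < n \<Longrightarrow> mu \<in> F \<Longrightarrow> integrable P (loss pol g i mu)"
    and int_loss_hat: "\<And>i. i < n \<Longrightarrow> integrable P (\<lambda>\<omega>. loss pol g i (muhat i (past \<omega> i)) \<omega>)"
    and int_term1: "\<And>i. i < n \<Longrightarrow> integrable P (\<lambda>\<omega>.
       (g (Xo \<omega> i) (Ao \<omega> i) / pol i (Xo \<omega> i) (past \<omega> i) (Ao \<omega> i)
          * (Yo \<omega> i - muhat i (past \<omega> i) (Xo \<omega> i) (Ao \<omega> i)))\<^sup>2)"
    and int_term2: "\<And>i. i < n \<Longrightarrow> integrable P (\<lambda>\<omega>.
       (innerA MA (g (Xo \<omega> i)) (muhat i (past \<omega> i) (Xo \<omega> i)))\<^sup>2)"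
    and int_regret: "integrable P (regret pol g n F muhat)"
  shows "integral\<^sup>L P (\<lambda>\<omega>. (aipw MA pol g n muhat \<omega> - tau Xi MA Gam g)\<^sup>2)
    \<le> (1 / real n) * (eff_var Xi MA Gam pol g n
         + (1 / real n) * integral\<^sup>L P (regret pol g n F muhat)
         + (INF mu\<in>F. wnorm2 Xi MA Gam pol g n (\<lambda>x a. mu x a - mu_star Gam x a)))"
  proof -
  interpret M: model2 Xi MA Gam pol g n muhat
    by (intro model2.intro model.intro model2_axioms.intro) (fact n_pos Xi_prob MA_sf Gam_kernel Gam_var pi_meas pi_nonneg pi_dens overlap
        g_meas muhat_meas int_gmu int_gmuhat int_target)+
  show ?thesis unfolding P_def
    by (rule M.final[OF F_meas F_ne int_sigma[unfolded P_def] int_F_norm[unfolded P_def]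
          int_loss_F[unfolded P_def] int_loss_hat[unfolded P_def] int_term1[unfolded P_def]
          int_term2[unfolded P_def] int_regret[unfolded P_def]])
qed

end
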